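(* Let $q\geq4$ be an integer, $n=q^2-1$, and let $A_0=I,A_1,A_2,A_3$ be the adjacency matrices of a symmetric 3-class association scheme on $n$ points with first eigenmatrix \[ P=\begin{bmatrix}1&\frac{q^2}{2}-q&\frac{q^2}{2}&q-2\\ 1&\frac q2&-\frac q2&-1\\ 1&-\frac q2+1&-\frac q2&q-2\\ 1&-\frac q2&\frac q2&-1\end{bmatrix}. \] Let $w_1,w_2,w_3$ be nonzero complex numbers satisfying one of the conditions (i)--(vi) below, so that $W=A_0+w_1A_1+w_2A_2+w_3A_3$ is a type-II matrix. Then $W$ is a complex Hadamard matrix if and only if $(w_1,w_2,w_3)$ satisfies (iii), (iv) or (v), or satisfies (vi) with $r=\sqrt{(17q-1)(q-1)}>0$. The conditions are: (i) $w_1=w_2=w_3$ and $w_3+\frac1{w_3}+q^2-3=0$; (ii) $w_3+\frac1{w_3}+q^2-3=0$ and $w_1=w_2=\frac{-(q-3)w_3+(q-1)}{q^2-2q-1}$; (iii) $w_1+\frac1{w_1}=\frac{2(q^2-6)}{q^2-4}$, $w_2=-1$, $w_3=w_1$; (iv) $w_1=w_3=1$ and $w_2+\frac1{w_2}=\frac{-2(q^2-2)}{q^2}$; (v) $w_1+\frac1{w_1}=-\frac2q$, $w_2=\frac1{w_1}$, $w_3=1$; (vi) for a real number $r$ with $r^2=(17q-1)(q-1)$, with $a_{0,1}=\frac{-(q-1)(q-2)+(q+2)r}{2q(q+1)}$, $a_{0,2}=\frac{(q+2)(q-1)-(q-2)r}{2q(q-3)}$, $a_{0,3}=\frac{5q^2-2q-19-(q-1)r}{2(q+1)(q-3)}$,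 $a_{1,2}=\frac{2(-q^4+2q^3+4q^2-10q+1+(q-1)r)}{q^2(q+1)(q-3)}$, $a_{1,3}=-a_{0,2}$: $w_1+\frac1{w_1}=a_{0,1}$ and $w_i=\frac{w_1^2-1}{a_{1,i}w_1-a_{0,i}}$ for $i=2,3$.
   Context: A symmetric association scheme with adjacency matrices $A_0=I,A_1,\dots,A_d$: symmetric $(0,1)$-matrices summing to $J$ whose span is closed under multiplication; with primitive idempotents $E_0=\frac1nJ,\dots,E_d$ the first eigenmatrix is defined by $A_j=\sum_iP_{i,j}E_i$. A type-II matrix is an $n\times n$ matrix $W$ with nonzero complex entries such that $W(W^{(-)})^\top=nI$ ($W^{(-)}$ the entrywise inverse). A complex Hadamard matrix is an $n\times n$ complex matrix $H$ whose entries have absolute value $1$ and $HH^*=nI$. *)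

theory Defs
  imports "HOL-Analysis.Analysis"
begin

definition scale_cmat :: "complex \<Rightarrow> complex^'a^'a \<Rightarrow> complex^'a^'a" where
  "scale_cmat c M = (\<chi> x y. c * M $ x $ y)"

definition all_ones :: "complex^'a^'a" where
  "all_ones = (\<chi> x y. 1)"

definition cmat_span :: "nat \<Rightarrow> (nat \<Rightarrow> complex^'a^'a) \<Rightarrow> (complex^'a^'a) set" where
  "cmat_span d A = {M. \<exists>c :: nat \<Rightarrow> complex. M = (\<Sum>k\<le>d. scale_cmat (c k) (A k))}"

definition sym_assoc_scheme :: "nat \<Rightarrow> (nat \<Rightarrow> complex^'a::finite^'a) \<Rightarrow> bool" where
  "sym_assoc_scheme d A \<longleftrightarrow>
     A 0 = mat 1 \<and>
     (\<forall>i\<le>d. \<forall>x y. A i $ x $ y \<in> {0, 1}) \<and>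
     (\<forall>i\<le>d. A i \<noteq> 0) \<and>
     (\<forall>i\<le>d. transpose (A i) = A i) \<and>
     (\<Sum>i\<le>d. A i) = all_ones \<and>
     (\<forall>i\<le>d. \<forall>j\<le>d. A i ** A j \<in> cmat_span d A)"

text \<open>P is a first eigenmatrix: there are primitive idempotents E 0 = J/n, E 1, ..., E d of the
  Bose-Mesner algebra (nonzero, pairwise orthogonal idempotents in the algebra summing to I)
  with A j = sum_i P i j E i.\<close>
definition first_eigenmatrix :: "nat \<Rightarrow> (nat \<Rightarrow> complex^'a::finite^'a) \<Rightarrow> (nat \<Rightarrow> nat \<Rightarrow> complex) \<Rightarrow> bool" where
  "first_eigenmatrix d A P \<longleftrightarrow>
     (\<exists>E :: nat \<Rightarrow> complex^'a^'a.
        E 0 = scale_cmat (1 / of_nat CARD('a)) all_ones \<and>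
        (\<forall>i\<le>d. E i \<noteq> 0) \<and>
        (\<forall>i\<le>d. \<forall>j\<le>d. E i ** E j = (if i = j then E i else 0)) \<and>
        (\<Sum>i\<le>d. E i) = mat 1 \<and>
        (\<forall>i\<le>d. E i \<in> cmat_span d A) \<and>
        (\<forall>j\<le>d. A j = (\<Sum>i\<le>d. scale_cmat (P i j) (E i))))"

definition entrywise_inverse :: "complex^'a^'a \<Rightarrow> complex^'a^'a" where
  "entrywise_inverse W = (\<chi> x y. inverse (W $ x $ y))"

definition type_II :: "complex^'a::finite^'a \<Rightarrow> bool" where
  "type_II W \<longleftrightarrow> (\<forall>x y. W $ x $ y \<noteq> 0) \<and>
     W ** transpose (entrywise_inverse W) = scale_cmat (of_nat CARD('a)) (mat 1)"

definition conj_transpose :: "complex^'a^'a \<Rightarrow> complex^'a^'a" where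
  "conj_transpose H = (\<chi> x y. cnj (H $ y $ x))"

definition complex_hadamard :: "complex^'a::finite^'a \<Rightarrow> bool" where
  "complex_hadamard H \<longleftrightarrow> (\<forall>x y. cmod (H $ x $ y) = 1) \<and>
     H ** conj_transpose H = scale_cmat (of_nat CARD('a)) (mat 1)"

definition P_q :: "nat \<Rightarrow> nat \<Rightarrow> nat \<Rightarrow> complex" where
  "P_q q i j = (let Q = (of_nat q :: complex) in
     [[1, Q^2/2 - Q, Q^2/2, Q - 2],
      [1, Q/2, -Q/2, -1],
      [1, -Q/2 + 1, -Q/2, Q - 2],
      [1, -Q/2, Q/2, -1]] ! i ! j)"

definition cond_i :: "nat \<Rightarrow> complex \<Rightarrow> complex \<Rightarrow> complex \<Rightarrow> bool" where
  "cond_i q w1 w2 w3 \<longleftrightarrow> (let Q = (of_nat q :: complex) in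
     w1 = w2 \<and> w2 = w3 \<and> w3 + 1/w3 + Q^2 - 3 = 0)"

definition cond_ii :: "nat \<Rightarrow> complex \<Rightarrow> complex \<Rightarrow> complex \<Rightarrow> bool" where
  "cond_ii q w1 w2 w3 \<longleftrightarrow> (let Q = (of_nat q :: complex) in
     w3 + 1/w3 + Q^2 - 3 = 0 \<and> w1 = w2 \<and>
     w2 = (-(Q - 3) * w3 + (Q - 1)) / (Q^2 - 2*Q - 1))"

definition cond_iii :: "nat \<Rightarrow> complex \<Rightarrow> complex \<Rightarrow> complex \<Rightarrow> bool" where
  "cond_iii q w1 w2 w3 \<longleftrightarrow> (let Q = (of_nat q :: complex) in
     w1 + 1/w1 = 2*(Q^2 - 6)/(Q^2 - 4) \<and> w2 = -1 \<and> w3 = w1)"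

definition cond_iv :: "nat \<Rightarrow> complex \<Rightarrow> complex \<Rightarrow> complex \<Rightarrow> bool" where
  "cond_iv q w1 w2 w3 \<longleftrightarrow> (let Q = (of_nat q :: complex) in
     w1 = 1 \<and> w3 = 1 \<and> w2 + 1/w2 = -2*(Q^2 - 2)/Q^2)"

definition cond_v :: "nat \<Rightarrow> complex \<Rightarrow> complex \<Rightarrow> complex \<Rightarrow> bool" where
  "cond_v q w1 w2 w3 \<longleftrightarrow> (let Q = (of_nat q :: complex) in
     w1 + 1/w1 = -2/Q \<and> w2 = 1/w1 \<and> w3 = 1)"

text \<open>Condition (vi) for a given real r (r^2 = (17q-1)(q-1) required separately).\<close>
definition cond_vi :: "nat \<Rightarrow> real \<Rightarrow> complex \<Rightarrow> complex \<Rightarrow> complex \<Rightarrow> bool" where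
  "cond_vi q r w1 w2 w3 \<longleftrightarrow> (let Q = (of_nat q :: complex); R = complex_of_real r;
     a01 = (-(Q - 1)*(Q - 2) + (Q + 2)*R) / (2*Q*(Q + 1));
     a02 = ((Q + 2)*(Q - 1) - (Q - 2)*R) / (2*Q*(Q - 3));
     a03 = (5*Q^2 - 2*Q - 19 - (Q - 1)*R) / (2*(Q + 1)*(Q - 3));
     a12 = 2*(-(Q^4) + 2*Q^3 + 4*Q^2 - 10*Q + 1 + (Q - 1)*R) / (Q^2*(Q + 1)*(Q - 3));
     a13 = -a02 in
     w1 + 1/w1 = a01 \<and>
     w2 = (w1^2 - 1) / (a12*w1 - a02) \<and>
     w3 = (w1^2 - 1) / (a13*w1 - a03))"

end

theory Submission
  imports Defs
begin


lemma cnj_unit: assumes "cmod w = 1" shows "cnj w = 1/w"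
proof -
  have "w * cnj w = 1" using complex_norm_square[of w] assms by simp
  moreover have "w \<noteq> 0" using assms by auto
  ultimately show ?thesis by (simp add: field_simps mult.commute)
qed

lemma unit_of_cnj: assumes "cnj w = 1/w" "w \<noteq> 0" shows "cmod w = 1"
proof -
  have "w * cnj w = 1" using assms by simp
  hence "complex_of_real ((cmod w)^2) = 1" by (simp only: complex_norm_square)
  hence "(cmod w)^2 = 1" by (metis of_real_eq_1_iff)
  thus ?thesis using norm_ge_zero[of w] by (auto simp: power2_eq_1_iff)
qed

lemma unit_bound: assumes "cmod w = 1" "w + 1/w = complex_of_real t" shows "t^2 \<le> 4"
proof -
  have "complex_of_real t = complex_of_real (2 * Re w)" using assms cnj_unit complex_add_cnj by metis
  hence tt: "t = 2 * Re w" by (metis of_real_eq_iff)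
  have "\<bar>Re w\<bar> \<le> 1" using abs_Re_le_cmod[of w] assms by simp
  hence "(Re w)^2 \<le> 1" by (simp add: abs_square_le_1)
  thus ?thesis using tt by (simp add: power_mult_distrib)
qed

lemma unit_sum: assumes w0: "w \<noteq> 0" and e: "w + 1/w = complex_of_real t" and t: "t^2 < 4" shows "cmod w = 1"
proof -
  have H: "w*w - complex_of_real t * w + 1 = 0"
  proof -
    have "w*(w + 1/w) = w*w + 1" using w0 by (simp add: field_simps)
    thus ?thesis using e by (simp add: algebra_simps)
  qed
  have re: "Re w * Re w - Im w * Im w - t * Re w + 1 = 0" using arg_cong[OF H, of Re] by simp
  have im: "2 * Re w * Im w - t * Im w = 0" using arg_cong[OF H, of Im] by (simp add: algebra_simps)
  have "Im w \<noteq> 0"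
  proof
    assume "Im w = 0"
    with re have "(2*Re w - t)^2 = t^2 - 4" by (simp add: power2_eq_square algebra_simps)
    with t show False using zero_le_power2[of "2*Re w - t"] by linarith
  qed
  with im have x: "t = 2 * Re w" by (simp add: algebra_simps) 
  have "Re w * Re w - Im w * Im w - (2*Re w) * Re w + 1 = 0" using re x by simp
  hence "(Re w)^2 + (Im w)^2 = 1" by (simp add: power2_eq_square algebra_simps)
  thus ?thesis by (simp add: cmod_def)
qed

lemma expand3:
  fixes w1 w2 w3 p0 p1 p2 p3 :: complex
  assumes "w1 \<noteq> 0" "w2 \<noteq> 0" "w3 \<noteq> 0"
  shows "(p0 + p1*w1 + p2*w2 + p3*w3) * (p0 + p1*(1/w1) + p2*(1/w2) + p3*(1/w3)) =
    p0^2 + p1^2 + p2^2 + p3^2 + p0*p1*(w1 + 1/w1) + p0*p2*(w2 + 1/w2) + p0*p3*(w3 + 1/w3)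
    + p1*p2*(w1/w2 + w2/w1) + p1*p3*(w1/w3 + w3/w1) + p2*p3*(w2/w3 + w3/w2)"
  using assms by (simp add: field_simps power2_eq_square)

lemma unit_w2:
  fixes w z b c :: complex
  assumes w0: "w \<noteq> 0" and cw: "cnj w = 1/w" and rb: "cnj b = b" and rc: "cnj c = c"
    and zd: "z = (w^2-1)/(b*w - c)" and nz: "z \<noteq> 0"
    and p: "w^4 - w^3*c*b + w^2*c^2 + w^2*b^2 - 2*w^2 - w*c*b + 1 = 0"
  shows "cmod z = 1"
proof -
  have D: "b*w - c \<noteq> 0" using nz zd by auto
  have N: "w^2 - 1 \<noteq> 0" using nz zd by auto
  have cD: "b - c*w \<noteq> 0"
  proof
    assume "b - c*w = 0"
    hence "cnj (b - c*w) = 0" by simp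
    hence "b - c/w = 0" using rb rc cw by simp
    hence "b*w - c = 0" using w0 by (simp add: field_simps)
    with D show False by simp
  qed
  have "cnj z = ((1/w)^2 - 1)/(b*(1/w) - c)" unfolding zd using cw rb rc by simp
  also have "\<dots> = (1 - w^2)/(w*(b - c*w))"
  proof -
    have e1: "(1/w)^2 - 1 = (1 - w^2)/w^2" using w0 by (simp add: field_simps)
    have e2: "b*(1/w) - c = (b - c*w)/w" using w0 by (simp add: field_simps)
    show ?thesis unfolding e1 e2 using w0 cD by (simp add: field_simps power2_eq_square)
  qed
  also have "\<dots> = (b*w - c)/(w^2 - 1)"
  proof -
    have "(1 - w^2)*(w^2-1) = (b*w - c)*(w*(b - c*w))" using p by algebra
    thus ?thesis using cD w0 N by (simp add: frac_eq_eq)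
  qed
  also have "\<dots> = 1/z" unfolding zd by simp
  finally show ?thesis using unit_of_cnj nz by blast
qed


lemma sq_lt4: "-2 < (x::real) \<Longrightarrow> x < 2 \<Longrightarrow> x^2 < 4"
proof -
  assume "-2 < x" "x < 2"
  hence "0 < (2 - x)*(2 + x)" by (intro mult_pos_pos) auto
  thus ?thesis by (simp add: algebra_simps power2_eq_square)
qed

lemma sq_gt4: "(x::real) < -2 \<Longrightarrow> 4 < x^2"
proof -
  assume "x < -2"
  hence "0 < (-2 - x)*(2 - x)" by (intro mult_pos_pos) auto
  thus ?thesis by (simp add: algebra_simps power2_eq_square)
qed

lemma ineq_pos:
  fixes q r :: real
  assumes q: "q \<ge> 4" and r: "r > 0" and r2: "r^2 = (17*q-1)*(q-1)"
  shows "((-(q-1)*(q-2) + (q+2)*r) / (2*q*(q+1)))^2 < 4"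
proof -
  define t where "t = q - 4"
  have t: "t \<ge> 0" using q t_def by simp
  have poly: "(5*q^2+q+2)^2 - (q+2)^2*((17*q-1)*(q-1)) = 8*t^4 + 88*t^3 + 312*t^2 + 392*t + 160"
    unfolding t_def by algebra
  have "8*t^4 + 88*t^3 + 312*t^2 + 392*t + 160 > 0" proof -
    have "0 \<le> 8*t^4 + 88*t^3 + 312*t^2 + 392*t" using t by simp
    thus ?thesis by linarith
  qed
  moreover have "((q+2)*r)^2 = (q+2)^2*((17*q-1)*(q-1))" by (simp add: power_mult_distrib r2)
  ultimately have "((q+2)*r)^2 < (5*q^2+q+2)^2" using poly by linarith
  moreover have "0 \<le> 5*q^2+q+2" using q by (simp add: add_nonneg_nonneg)
  ultimately have up: "(q+2)*r < 5*q^2+q+2" by (rule power_less_imp_less_base)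
  have "(q+2)*r > 0" using q r by simp
  moreover have "q^2 \<ge> 0" by simp
  ultimately have lo: "(q+2)*r > -3*q^2-7*q+2" using q by linarith
  have d: "2*q*(q+1) > 0" using q by simp
  have "(-(q-1)*(q-2) + (q+2)*r) / (2*q*(q+1)) < 2" using up d by (simp add: divide_less_eq algebra_simps power2_eq_square)
  moreover have "-2 < (-(q-1)*(q-2) + (q+2)*r) / (2*q*(q+1))" using lo d by (simp add: less_divide_eq algebra_simps power2_eq_square)
  ultimately show ?thesis by (rule sq_lt4[rotated])
qed

lemma ineq_neg:
  fixes q r :: real
  assumes q: "q \<ge> 4" and r: "r < 0" and r2: "r^2 = (17*q-1)*(q-1)"
  shows "4 < ((-(q-1)*(q-2) + (q+2)*r) / (2*q*(q+1)))^2"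
proof -
  define t where "t = q - 4"
  have t: "t \<ge> 0" using q t_def by simp
  have poly: "(q+2)^2*((17*q-1)*(q-1)) - (3*q^2+7*q-2)^2 = 8*t^4 + 136*t^3 + 824*t^2 + 2072*t + 1760"
    unfolding t_def by algebra
  have "8*t^4 + 136*t^3 + 824*t^2 + 2072*t + 1760 > 0" proof -
    have "0 \<le> 8*t^4 + 136*t^3 + 824*t^2 + 2072*t" using t by simp
    thus ?thesis by linarith
  qed
  moreover have "((q+2)*(-r))^2 = (q+2)^2*((17*q-1)*(q-1))" by (simp add: power_mult_distrib r2)
  ultimately have "(3*q^2+7*q-2)^2 < ((q+2)*(-r))^2" using poly by linarith
  moreover have "0 \<le> (q+2)*(-r)" using q r by (intro mult_nonneg_nonneg) auto
  ultimately have up: "3*q^2+7*q-2 < (q+2)*(-r)" by (rule power_less_imp_less_base)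
  have d: "2*q*(q+1) > 0" using q by simp
  have "(-(q-1)*(q-2) + (q+2)*r) / (2*q*(q+1)) < -2" using up d by (simp add: divide_less_eq algebra_simps power2_eq_square)
  thus ?thesis by (rule sq_gt4)
qed

lemma q16: fixes q :: real assumes "q \<ge> 4" shows "q^2 \<ge> 16"
proof -
  have "4^2 \<le> q^2" using assms by (intro power_mono) auto
  thus ?thesis by simp
qed

lemma ineq_iii: fixes q :: real assumes "q \<ge> 4" shows "(2*(q^2-6)/(q^2-4))^2 < 4"
proof -
  have q: "q^2 \<ge> 16" using q16 assms by blast
  have d: "q^2 - 4 > 0" using q by simp
  have "2*(q^2-6)/(q^2-4) < 2" using d by (simp add: divide_less_eq)
  moreover have "-2 < 2*(q^2-6)/(q^2-4)" using d q by (simp add: less_divide_eq)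
  ultimately show ?thesis by (rule sq_lt4[rotated])
qed

lemma ineq_iv: fixes q :: real assumes "q \<ge> 4" shows "(-2*(q^2-2)/q^2)^2 < 4"
proof -
  have q: "q^2 \<ge> 16" using q16 assms by blast
  have "-2*(q^2-2)/q^2 < 2" using q by (simp add: divide_less_eq)
  moreover have "-2 < -2*(q^2-2)/q^2" using q by (simp add: less_divide_eq)
  ultimately show ?thesis by (rule sq_lt4[rotated])
qed

lemma ineq_v: fixes q :: real assumes "q \<ge> 4" shows "(-2/q)^2 < 4"
proof -
  have "2/q \<le> 2/4" using assms by (intro divide_left_mono) auto
  moreover have "2/q > 0" using assms by simp
  ultimately have "-2 < -2/q" "-2/q < 2" by linarith+
  thus ?thesis by (intro sq_lt4)
qed

lemma ineq_i: fixes q :: real assumes "q \<ge> 4" shows "4 < (3 - q^2)^2"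
proof -
  have d: "q^2 \<ge> 16" using q16 assms by blast
  show ?thesis by (rule sq_gt4) (use d in simp)
qed


lemma vi_core:
  fixes w w2 w3 u0 a02 a03 a12 a23 :: complex
  assumes w0: "w \<noteq> 0" and w2d: "w2 = (w^2-1)/(a12*w - a02)" and w3d: "w3 = (w^2-1)/((-a02)*w - a03)"
    and n2: "w2 \<noteq> 0" and n3: "w3 \<noteq> 0" and ws: "w + 1/w = u0"
    and K2: "u0^2 - u0*a02*a12 + a02^2 + a12^2 - 4 = 0"
    and K3: "u0^2 + u0*a02*a03 + a02^2 + a03^2 - 4 = 0"
    and E1: "a02*a03*a23 + a02*a12*a23 - a03^2 + a12^2 = 0"
    and E2: "u0*a02^2 + u0*a02*a12*a23 + u0*a12^2 - a02^2*a23 + 2*a02*a03 - 2*a02*a12 + a03*a12*a23 = 0"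
  shows "w2 + 1/w2 = a02" "w3 + 1/w3 = a03" "w/w2 + w2/w = a12" "w/w3 + w3/w = -a02"
     "w2/w3 + w3/w2 = a23"
     "w^4 - w^3*a02*a12 + w^2*a02^2 + w^2*a12^2 - 2*w^2 - w*a02*a12 + 1 = 0"
     "w^4 - w^3*a03*(-a02) + w^2*a03^2 + w^2*(-a02)^2 - 2*w^2 - w*a03*(-a02) + 1 = 0"
proof -
  have H: "w^2 - u0*w + 1 = 0"
  proof -
    have "w*(w + 1/w) = w^2 + 1" using w0 by (simp add: field_simps power2_eq_square)
    thus ?thesis using ws by (simp add: algebra_simps)
  qed
  have D2: "a12*w - a02 \<noteq> 0" using n2 w2d by auto
  have N: "w^2 - 1 \<noteq> 0" using n2 w2d by auto
  have D3: "(-a02)*w - a03 \<noteq> 0" using n3 w3d by auto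
  have c2: "(w^4 - w^3*a02*a12 + w^2*a02^2 + w^2*a12^2 - 2*w^2 - w*a02*a12 + 1) = (w^2 - u0*w + 1)*(w^2 + w*u0 - w*a02*a12 + u0^2 - u0*a02*a12 + a02^2 + a12^2 - 3) + (u0*w - 1)*(u0^2 - u0*a02*a12 + a02^2 + a12^2 - 4)" by algebra
  have c3: "(w^4 + w^3*a02*a03 + w^2*a02^2 + w^2*a03^2 - 2*w^2 + w*a02*a03 + 1) = (w^2 - u0*w + 1)*(w^2 + w*u0 + w*a02*a03 + u0^2 + u0*a02*a03 + a02^2 + a03^2 - 3) + (u0*w - 1)*(u0^2 + u0*a02*a03 + a02^2 + a03^2 - 4)" by algebra
  have c23: "(w^2*a02^2 + w^2*a02*a12*a23 + w^2*a12^2 - w*a02^2*a23 + 2*w*a02*a03 - 2*w*a02*a12 + w*a03*a12*a23 + a02^2 - a02*a03*a23 + a03^2) = (w^2 - u0*w + 1)*(a02^2 + a02*a12*a23 + a12^2) + w*(u0*a02^2 + u0*a02*a12*a23 + u0*a12^2 - a02^2*a23 + 2*a02*a03 - 2*a02*a12 + a03*a12*a23) - (a02*a03*a23 + a02*a12*a23 - a03^2 + a12^2)" by algebra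
  have p2: "w^4 - w^3*a02*a12 + w^2*a02^2 + w^2*a12^2 - 2*w^2 - w*a02*a12 + 1 = 0" using c2 H K2 by simp
  have p3: "w^4 + w^3*a02*a03 + w^2*a02^2 + w^2*a03^2 - 2*w^2 + w*a02*a03 + 1 = 0" using c3 H K3 by simp
  have p23: "w^2*a02^2 + w^2*a02*a12*a23 + w^2*a12^2 - w*a02^2*a23 + 2*w*a02*a03 - 2*w*a02*a12 + w*a03*a12*a23 + a02^2 - a02*a03*a23 + a03^2 = 0" using c23 H E1 E2 by simp
  have gl: "\<And>x y c. x \<noteq> 0 \<Longrightarrow> y \<noteq> 0 \<Longrightarrow> x^2 + y^2 - c*x*y = 0 \<Longrightarrow> x/y + y/x = (c::complex)"
  proof -
    fix x y c :: complex assume "x \<noteq> 0" "y \<noteq> 0" "x^2 + y^2 - c*x*y = 0"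
    thus "x/y + y/x = c" by (simp add: field_simps power2_eq_square)
  qed
  have e2: "w2 = (w^2-1)/(a12*w - a02)" "1/w2 = (a12*w - a02)/(w^2-1)" using w2d by simp_all
  have e3: "w3 = (w^2-1)/((-a02)*w - a03)" "1/w3 = ((-a02)*w - a03)/(w^2-1)" using w3d by simp_all
  show "w2 + 1/w2 = a02" unfolding e2(2) unfolding e2(1)
    by (rule gl[OF N D2]) (use p2 in algebra)
  show "w3 + 1/w3 = a03" unfolding e3(2) unfolding e3(1)
    by (rule gl[OF N D3]) (use p3 in algebra)
  have "w/w2 = w*(a12*w - a02)/(w^2-1)" "w2/w = (w^2-1)/(w*(a12*w - a02))" using w2d by simp_all
  then show "w/w2 + w2/w = a12"
    by (simp only:) (rule gl, use D2 w0 N in simp, use N in simp, use p2 in algebra)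
  have "w/w3 = w*((-a02)*w - a03)/(w^2-1)" "w3/w = (w^2-1)/(w*((-a02)*w - a03))" using w3d by simp_all
  then show "w/w3 + w3/w = -a02"
    by (simp only:) (rule gl, use D3 w0 N in simp, use N in simp, use p3 in algebra)
  have "w2/w3 = ((-a02)*w - a03)/(a12*w - a02)" "w3/w2 = (a12*w - a02)/((-a02)*w - a03)" using w2d w3d N by simp_all
  then show "w2/w3 + w3/w2 = a23"
    by (simp only:) (rule gl[OF D3 D2], use p23 in algebra)
  show "w^4 - w^3*a02*a12 + w^2*a02^2 + w^2*a12^2 - 2*w^2 - w*a02*a12 + 1 = 0" by (rule p2)
  show "w^4 - w^3*a03*(-a02) + w^2*a03^2 + w^2*(-a02)^2 - 2*w^2 - w*a03*(-a02) + 1 = 0" using p3 by (simp add: algebra_simps)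
qed


lemma sum4: "(\<Sum>i\<le>(3::nat). f i) = f 0 + f 1 + f 2 + (f 3 :: 'b::comm_monoid_add)"
proof -
  have "{..(3::nat)} = {0,1,2,3}" by auto
  thus ?thesis by (simp add: add_ac)
qed

definition S4 :: "(nat \<Rightarrow> complex) \<Rightarrow> (nat \<Rightarrow> complex^'a^'a) \<Rightarrow> complex^'a^'a" where
  "S4 c E = scale_cmat (c 0) (E 0) + scale_cmat (c 1) (E 1) + scale_cmat (c 2) (E 2) + scale_cmat (c 3) (E 3)"

lemma sc_entry[simp]: "scale_cmat c M $ x $ y = c * M $ x $ y"
  by (simp add: scale_cmat_def)

lemma sc_mult: "scale_cmat a (M::complex^'a::finite^'a) ** scale_cmat b N = scale_cmat (a*b) (M ** N)"
  by (simp add: vec_eq_iff matrix_matrix_mult_def sum_distrib_left mult_ac)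

lemma radd: "((M::complex^'a::finite^'a) + N) ** K = M ** K + N ** K"
  by (simp add: vec_eq_iff matrix_matrix_mult_def sum.distrib distrib_right)

lemma sc_zero: "scale_cmat a (0::complex^'a^'a) = 0"
  by (simp add: vec_eq_iff)

lemma S4_mult:
  fixes E :: "nat \<Rightarrow> complex^'a::finite^'a"
  assumes orth: "\<forall>i\<le>3. \<forall>j\<le>3. E i ** E j = (if i = j then E i else 0)"
  shows "S4 c E ** S4 d E = S4 (\<lambda>i. c i * d i) E"
proof -
  have o: "E i ** E j = (if i = j then E i else 0)" if "i \<in> {0,1,2,3}" "j \<in> {0,1,2,3}" for i j
    using orth that by auto
  show ?thesis
    unfolding S4_def matrix_add_ldistrib radd sc_mult
    by (simp add: o sc_zero)
qed

lemma S4_const: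
  fixes E :: "nat \<Rightarrow> complex^'a::finite^'a"
  assumes "(\<Sum>i\<le>3. E i) = mat 1"
  shows "S4 (\<lambda>i. c) E = scale_cmat c (mat 1)"
proof -
  have "S4 (\<lambda>i. c) E = scale_cmat c (\<Sum>i\<le>3. E i)"
    unfolding sum4 S4_def by (simp add: vec_eq_iff algebra_simps)
  thus ?thesis using assms by simp
qed

lemma scheme_facts:
  fixes A :: "nat \<Rightarrow> complex^'a::finite^'a"
  assumes "sym_assoc_scheme 3 A"
  shows "\<And>i x y. i \<le> 3 \<Longrightarrow> A i $ x $ y \<in> {0,1}"
    and "\<And>x y. A 0 $ x $ y + A 1 $ x $ y + A 2 $ x $ y + A 3 $ x $ y = 1"
    and "\<And>i x y. i \<le> 3 \<Longrightarrow> A i $ y $ x = A i $ x $ y"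
    and "\<And>i. i \<le> 3 \<Longrightarrow> A i \<noteq> 0"
    and "A 0 = mat 1"
proof -
  note d = assms[unfolded sym_assoc_scheme_def]
  show "\<And>i x y. i \<le> 3 \<Longrightarrow> A i $ x $ y \<in> {0,1}" using d by blast
  show "\<And>i. i \<le> 3 \<Longrightarrow> A i \<noteq> 0" using d by blast
  show "A 0 = mat 1" using d by blast
  show "\<And>x y. A 0 $ x $ y + A 1 $ x $ y + A 2 $ x $ y + A 3 $ x $ y = 1"
  proof -
    fix x y
    have "(\<Sum>i\<le>3. A i) = all_ones" using d by blast
    hence "(A 0 + A 1 + A 2 + A 3) $ x $ y = all_ones $ x $ y" unfolding sum4 by simp
    thus "A 0 $ x $ y + A 1 $ x $ y + A 2 $ x $ y + A 3 $ x $ y = 1" by (simp add: all_ones_def)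
  qed
  show "\<And>i x y. i \<le> 3 \<Longrightarrow> A i $ y $ x = A i $ x $ y"
  proof -
    fix i x y assume "i \<le> (3::nat)"
    hence "transpose (A i) = A i" using d by blast
    hence "transpose (A i) $ x $ y = A i $ x $ y" by simp
    thus "A i $ y $ x = A i $ x $ y" by (simp add: transpose_def)
  qed
qed

lemma entry_cases:
  fixes a0 a1 a2 a3 :: complex
  assumes "a0 \<in> {0,1}" "a1 \<in> {0,1}" "a2 \<in> {0,1}" "a3 \<in> {0,1}" "a0 + a1 + a2 + a3 = 1"
  shows "(a0 = 1 \<and> a1 = 0 \<and> a2 = 0 \<and> a3 = 0) \<or> (a0 = 0 \<and> a1 = 1 \<and> a2 = 0 \<and> a3 = 0) \<or>
         (a0 = 0 \<and> a1 = 0 \<and> a2 = 1 \<and> a3 = 0) \<or> (a0 = 0 \<and> a1 = 0 \<and> a2 = 0 \<and> a3 = 1)"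
  using assms by auto

lemma hadamard_suff:
  fixes A :: "nat \<Rightarrow> complex^'a::finite^'a"
  assumes sch: "sym_assoc_scheme 3 A" and eig: "first_eigenmatrix 3 A P"
   and m1: "cmod w1 = 1" and m2: "cmod w2 = 1" and m3: "cmod w3 = 1"
   and rows: "\<And>i. i \<le> 3 \<Longrightarrow> (P i 0 + P i 1*w1 + P i 2*w2 + P i 3*w3) *
        (P i 0 + P i 1*cnj w1 + P i 2*cnj w2 + P i 3*cnj w3) = of_nat CARD('a)"
  shows "complex_hadamard (A 0 + scale_cmat w1 (A 1) + scale_cmat w2 (A 2) + scale_cmat w3 (A 3))"
proof -
  note sf = scheme_facts[OF sch]
  from eig obtain E :: "nat \<Rightarrow> complex^'a^'a" where
    orth: "\<forall>i\<le>3. \<forall>j\<le>3. E i ** E j = (if i = j then E i else 0)" and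
    sumE: "(\<Sum>i\<le>3. E i) = mat 1" and
    Aj: "\<forall>j\<le>3. A j = (\<Sum>i\<le>3. scale_cmat (P i j) (E i))"
    unfolding first_eigenmatrix_def by blast
  have Aj': "A j $ x $ y = P 0 j * E 0 $ x $ y + P 1 j * E 1 $ x $ y + P 2 j * E 2 $ x $ y + P 3 j * E 3 $ x $ y"
    if "j \<le> 3" for j x y
  proof -
    have "A j = (\<Sum>i\<le>3. scale_cmat (P i j) (E i))" using Aj that by blast
    thus ?thesis unfolding sum4 by simp
  qed
  define W where "W = A 0 + scale_cmat w1 (A 1) + scale_cmat w2 (A 2) + scale_cmat w3 (A 3)"
  define W' where "W' = A 0 + scale_cmat (cnj w1) (A 1) + scale_cmat (cnj w2) (A 2) + scale_cmat (cnj w3) (A 3)"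
  have real_entry: "cnj (A i $ x $ y) = A i $ x $ y" if "i \<le> 3" for i x y
    using sf(1)[OF that, of x y] by auto
  have cW: "conj_transpose W = W'"
    unfolding W_def W'_def conj_transpose_def
    by (simp add: vec_eq_iff sf(3) real_entry)
  have WS: "W = S4 (\<lambda>i. P i 0 + P i 1*w1 + P i 2*w2 + P i 3*w3) E"
    unfolding W_def S4_def by (simp add: vec_eq_iff Aj' algebra_simps)
  have WS': "W' = S4 (\<lambda>i. P i 0 + P i 1*cnj w1 + P i 2*cnj w2 + P i 3*cnj w3) E"
    unfolding W'_def S4_def by (simp add: vec_eq_iff Aj' algebra_simps)
  have "W ** conj_transpose W = S4 (\<lambda>i. (P i 0 + P i 1*w1 + P i 2*w2 + P i 3*w3) *
        (P i 0 + P i 1*cnj w1 + P i 2*cnj w2 + P i 3*cnj w3)) E"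
    unfolding cW unfolding WS WS' by (rule S4_mult[OF orth])
  also have "\<dots> = S4 (\<lambda>i. of_nat CARD('a)) E"
    unfolding S4_def using rows[of 0] rows[of 1] rows[of 2] rows[of 3] by simp
  also have "\<dots> = scale_cmat (of_nat CARD('a)) (mat 1)" by (rule S4_const[OF sumE])
  finally have prod: "W ** conj_transpose W = scale_cmat (of_nat CARD('a)) (mat 1)" .
  have ent: "cmod (W $ x $ y) = 1" for x y
  proof -
    have "W $ x $ y = A 0 $ x $ y + w1 * A 1 $ x $ y + w2 * A 2 $ x $ y + w3 * A 3 $ x $ y"
      unfolding W_def by simp
    moreover have "(A 0 $ x $ y = 1 \<and> A 1 $ x $ y = 0 \<and> A 2 $ x $ y = 0 \<and> A 3 $ x $ y = 0) \<or>
       (A 0 $ x $ y = 0 \<and> A 1 $ x $ y = 1 \<and> A 2 $ x $ y = 0 \<and> A 3 $ x $ y = 0) \<or>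
       (A 0 $ x $ y = 0 \<and> A 1 $ x $ y = 0 \<and> A 2 $ x $ y = 1 \<and> A 3 $ x $ y = 0) \<or>
       (A 0 $ x $ y = 0 \<and> A 1 $ x $ y = 0 \<and> A 2 $ x $ y = 0 \<and> A 3 $ x $ y = 1)"
      by (rule entry_cases) (use sf(1) sf(2) in auto)
    ultimately show ?thesis using m1 m2 m3 by auto
  qed
  show ?thesis unfolding complex_hadamard_def W_def[symmetric] using ent prod by blast
qed

lemma hadamard_nec:
  fixes A :: "nat \<Rightarrow> complex^'a::finite^'a"
  assumes sch: "sym_assoc_scheme 3 A"
   and h: "complex_hadamard (A 0 + scale_cmat w1 (A 1) + scale_cmat w2 (A 2) + scale_cmat w3 (A 3))"
  shows "cmod w1 = 1" "cmod w2 = 1" "cmod w3 = 1"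
proof -
  note sf = scheme_facts[OF sch]
  define W where "W = A 0 + scale_cmat w1 (A 1) + scale_cmat w2 (A 2) + scale_cmat w3 (A 3)"
  have ent: "cmod (W $ x $ y) = 1" for x y using h unfolding complex_hadamard_def W_def by blast
  have Wxy: "W $ x $ y = A 0 $ x $ y + w1 * A 1 $ x $ y + w2 * A 2 $ x $ y + w3 * A 3 $ x $ y" for x y
    unfolding W_def by simp
  have ex: "\<exists>x y. A i $ x $ y = 1" if "i \<le> 3" for i
  proof -
    have "A i \<noteq> 0" using sf(4) that by blast
    then obtain x y where "A i $ x $ y \<noteq> 0" by (metis vec_eq_iff zero_index)
    thus ?thesis using sf(1)[OF that, of x y] by auto
  qed
  have cs: "\<And>x y. (A 0 $ x $ y = 1 \<and> A 1 $ x $ y = 0 \<and> A 2 $ x $ y = 0 \<and> A 3 $ x $ y = 0) \<or>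
       (A 0 $ x $ y = 0 \<and> A 1 $ x $ y = 1 \<and> A 2 $ x $ y = 0 \<and> A 3 $ x $ y = 0) \<or>
       (A 0 $ x $ y = 0 \<and> A 1 $ x $ y = 0 \<and> A 2 $ x $ y = 1 \<and> A 3 $ x $ y = 0) \<or>
       (A 0 $ x $ y = 0 \<and> A 1 $ x $ y = 0 \<and> A 2 $ x $ y = 0 \<and> A 3 $ x $ y = 1)"
    by (rule entry_cases) (use sf(1) sf(2) in auto)
  obtain x y where "A 1 $ x $ y = 1" using ex[of 1] by auto
  with cs[of x y] have "W $ x $ y = w1" using Wxy by auto
  thus "cmod w1 = 1" using ent by metis
  obtain x y where "A 2 $ x $ y = 1" using ex[of 2] by auto
  with cs[of x y] have "W $ x $ y = w2" using Wxy by auto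
  thus "cmod w2 = 1" using ent by metis
  obtain x y where "A 3 $ x $ y = 1" using ex[of 3] by auto
  with cs[of x y] have "W $ x $ y = w3" using Wxy by auto
  thus "cmod w3 = 1" using ent by metis
qed

lemma K2:
  fixes Q R u0 a02 a12 :: complex
  assumes nz: "Q \<noteq> 0" "Q+1 \<noteq> 0" "Q-3 \<noteq> 0" and R2: "R^2 = (17*Q-1)*(Q-1)" and h_u0: "(2*Q*(Q+1))*u0 = (0 - Q^2 + Q*R + 3*Q + 2*R - 2)" and h_a02: "(2*Q*(Q-3))*a02 = (Q^2 - Q*R + Q + 2*R - 2)" and h_a12: "(Q^2*(Q+1)*(Q-3))*a12 = (0 - 2*Q^4 + 4*Q^3 + 8*Q^2 + 2*Q*R - 20*Q - 2*R + 2)"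
  shows "(u0^2 - u0*a02*a12 + a02^2 + a12^2 - 4) = 0"
proof -
  have "((2*Q*(Q+1))^2*(2*Q*(Q-3))^2*(Q^2*(Q+1)*(Q-3))^2) * (u0^2 - u0*a02*a12 + a02^2 + a12^2 - 4) = (0 - 4)*(2*Q*(Q+1))^2*(2*Q*(Q-3))^2*(Q^2*(Q+1)*(Q-3))^2 + (1)*(2*Q*(Q+1))^2*(2*Q*(Q-3))^2*((Q^2*(Q+1)*(Q-3))*a12)^2 + (1)*(2*Q*(Q+1))^2*((2*Q*(Q-3))*a02)^2*(Q^2*(Q+1)*(Q-3))^2 + (0 - 1)*((2*Q*(Q+1))*u0)*(2*Q*(Q+1))*((2*Q*(Q-3))*a02)*(2*Q*(Q-3))*((Q^2*(Q+1)*(Q-3))*a12)*(Q^2*(Q+1)*(Q-3)) + (1)*((2*Q*(Q+1))*u0)^2*(2*Q*(Q-3))^2*(Q^2*(Q+1)*(Q-3))^2" by algebra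
  also have "\<dots> = (0 - 4)*(2*Q*(Q+1))^2*(2*Q*(Q-3))^2*(Q^2*(Q+1)*(Q-3))^2 + (1)*(2*Q*(Q+1))^2*(2*Q*(Q-3))^2*(0 - 2*Q^4 + 4*Q^3 + 8*Q^2 + 2*Q*R - 20*Q - 2*R + 2)^2 + (1)*(2*Q*(Q+1))^2*(Q^2 - Q*R + Q + 2*R - 2)^2*(Q^2*(Q+1)*(Q-3))^2 + (0 - 1)*(0 - Q^2 + Q*R + 3*Q + 2*R - 2)*(2*Q*(Q+1))*(Q^2 - Q*R + Q + 2*R - 2)*(2*Q*(Q-3))*(0 - 2*Q^4 + 4*Q^3 + 8*Q^2 + 2*Q*R - 20*Q - 2*R + 2)*(Q^2*(Q+1)*(Q-3)) + (1)*(0 - Q^2 + Q*R + 3*Q + 2*R - 2)^2*(2*Q*(Q-3))^2*(Q^2*(Q+1)*(Q-3))^2" unfolding h_u0 h_a02 h_a12 ..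
  also have "\<dots> = (R^2 - (17*Q-1)*(Q-1)) * (0 - 8*Q^12 + 8*Q^11*R - 16*Q^11 - 40*Q^10*R + 232*Q^10 - 16*Q^9*R + 224*Q^9 + 272*Q^8*R - 2008*Q^8 - 88*Q^7*R - 656*Q^7 - 520*Q^6*R + 4120*Q^6 + 96*Q^5*R + 2496*Q^5 + 288*Q^4*R - 288*Q^4)" by algebra
  also have "\<dots> = 0" using R2 by simp
  finally have "((2*Q*(Q+1))^2*(2*Q*(Q-3))^2*(Q^2*(Q+1)*(Q-3))^2) * (u0^2 - u0*a02*a12 + a02^2 + a12^2 - 4) = 0" .
  moreover have "(2*Q*(Q+1))^2*(2*Q*(Q-3))^2*(Q^2*(Q+1)*(Q-3))^2 \<noteq> 0" using nz by (simp only: mult_eq_0_iff power_eq_0_iff de_Morgan_disj) simp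
  ultimately show ?thesis by simp
qed

lemma K3:
  fixes Q R u0 a02 a03 :: complex
  assumes nz: "Q \<noteq> 0" "Q+1 \<noteq> 0" "Q-3 \<noteq> 0" and R2: "R^2 = (17*Q-1)*(Q-1)" and h_u0: "(2*Q*(Q+1))*u0 = (0 - Q^2 + Q*R + 3*Q + 2*R - 2)" and h_a02: "(2*Q*(Q-3))*a02 = (Q^2 - Q*R + Q + 2*R - 2)" and h_a03: "(2*(Q+1)*(Q-3))*a03 = (5*Q^2 - Q*R - 2*Q + R - 19)"
  shows "(u0^2 + u0*a02*a03 + a02^2 + a03^2 - 4) = 0"
proof -
  have "((2*Q*(Q+1))^2*(2*Q*(Q-3))^2*(2*(Q+1)*(Q-3))^2) * (u0^2 + u0*a02*a03 + a02^2 + a03^2 - 4) = (0 - 4)*(2*Q*(Q+1))^2*(2*Q*(Q-3))^2*(2*(Q+1)*(Q-3))^2 + (1)*(2*Q*(Q+1))^2*(2*Q*(Q-3))^2*((2*(Q+1)*(Q-3))*a03)^2 + (1)*(2*Q*(Q+1))^2*((2*Q*(Q-3))*a02)^2*(2*(Q+1)*(Q-3))^2 + (1)*((2*Q*(Q+1))*u0)*(2*Q*(Q+1))*((2*Q*(Q-3))*a02)*(2*Q*(Q-3))*((2*(Q+1)*(Q-3))*a03)*(2*(Q+1)*(Q-3)) + (1)*((2*Q*(Q+1))*u0)^2*(2*Q*(Q-3))^2*(2*(Q+1)*(Q-3))^2" by algebra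
  also have "\<dots> = (0 - 4)*(2*Q*(Q+1))^2*(2*Q*(Q-3))^2*(2*(Q+1)*(Q-3))^2 + (1)*(2*Q*(Q+1))^2*(2*Q*(Q-3))^2*(5*Q^2 - Q*R - 2*Q + R - 19)^2 + (1)*(2*Q*(Q+1))^2*(Q^2 - Q*R + Q + 2*R - 2)^2*(2*(Q+1)*(Q-3))^2 + (1)*(0 - Q^2 + Q*R + 3*Q + 2*R - 2)*(2*Q*(Q+1))*(Q^2 - Q*R + Q + 2*R - 2)*(2*Q*(Q-3))*(5*Q^2 - Q*R - 2*Q + R - 19)*(2*(Q+1)*(Q-3)) + (1)*(0 - Q^2 + Q*R + 3*Q + 2*R - 2)^2*(2*Q*(Q-3))^2*(2*(Q+1)*(Q-3))^2" unfolding h_u0 h_a02 h_a03 ..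
  also have "\<dots> = (R^2 - (17*Q-1)*(Q-1)) * (0 - 8*Q^10 + 8*Q^9*R - 16*Q^9 - 40*Q^8*R + 232*Q^8 - 16*Q^7*R + 224*Q^7 + 272*Q^6*R - 2008*Q^6 - 88*Q^5*R - 656*Q^5 - 520*Q^4*R + 4120*Q^4 + 96*Q^3*R + 2496*Q^3 + 288*Q^2*R - 288*Q^2)" by algebra
  also have "\<dots> = 0" using R2 by simp
  finally have "((2*Q*(Q+1))^2*(2*Q*(Q-3))^2*(2*(Q+1)*(Q-3))^2) * (u0^2 + u0*a02*a03 + a02^2 + a03^2 - 4) = 0" .
  moreover have "(2*Q*(Q+1))^2*(2*Q*(Q-3))^2*(2*(Q+1)*(Q-3))^2 \<noteq> 0" using nz by (simp only: mult_eq_0_iff power_eq_0_iff de_Morgan_disj) simp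
  ultimately show ?thesis by simp
qed

lemma E1:
  fixes Q R a02 a03 a12 a23 :: complex
  assumes nz: "Q \<noteq> 0" "Q+1 \<noteq> 0" "Q-3 \<noteq> 0" and R2: "R^2 = (17*Q-1)*(Q-1)" and h_a02: "(2*Q*(Q-3))*a02 = (Q^2 - Q*R + Q + 2*R - 2)" and h_a03: "(2*(Q+1)*(Q-3))*a03 = (5*Q^2 - Q*R - 2*Q + R - 19)" and h_a12: "(Q^2*(Q+1)*(Q-3))*a12 = (0 - 2*Q^4 + 4*Q^3 + 8*Q^2 + 2*Q*R - 20*Q - 2*R + 2)" and h_a23: "(2*Q*(Q+1))*a23 = (Q^2 - Q*R - 3*Q - 2*R + 2)"
  shows "(a02*a03*a23 + a02*a12*a23 - a03^2 + a12^2) = 0"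
proof -
  have "((2*Q*(Q-3))*(2*(Q+1)*(Q-3))^2*(Q^2*(Q+1)*(Q-3))^2*(2*Q*(Q+1))) * (a02*a03*a23 + a02*a12*a23 - a03^2 + a12^2) = (1)*(2*Q*(Q-3))*(2*(Q+1)*(Q-3))^2*((Q^2*(Q+1)*(Q-3))*a12)^2*(2*Q*(Q+1)) + (0 - 1)*(2*Q*(Q-3))*((2*(Q+1)*(Q-3))*a03)^2*(Q^2*(Q+1)*(Q-3))^2*(2*Q*(Q+1)) + (1)*((2*Q*(Q-3))*a02)*(2*(Q+1)*(Q-3))^2*((Q^2*(Q+1)*(Q-3))*a12)*(Q^2*(Q+1)*(Q-3))*((2*Q*(Q+1))*a23) + (1)*((2*Q*(Q-3))*a02)*((2*(Q+1)*(Q-3))*a03)*(2*(Q+1)*(Q-3))*(Q^2*(Q+1)*(Q-3))^2*((2*Q*(Q+1))*a23)" by algebra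
  also have "\<dots> = (1)*(2*Q*(Q-3))*(2*(Q+1)*(Q-3))^2*(0 - 2*Q^4 + 4*Q^3 + 8*Q^2 + 2*Q*R - 20*Q - 2*R + 2)^2*(2*Q*(Q+1)) + (0 - 1)*(2*Q*(Q-3))*(5*Q^2 - Q*R - 2*Q + R - 19)^2*(Q^2*(Q+1)*(Q-3))^2*(2*Q*(Q+1)) + (1)*(Q^2 - Q*R + Q + 2*R - 2)*(2*(Q+1)*(Q-3))^2*(0 - 2*Q^4 + 4*Q^3 + 8*Q^2 + 2*Q*R - 20*Q - 2*R + 2)*(Q^2*(Q+1)*(Q-3))*(Q^2 - Q*R - 3*Q - 2*R + 2) + (1)*(Q^2 - Q*R + Q + 2*R - 2)*(5*Q^2 - Q*R - 2*Q + R - 19)*(2*(Q+1)*(Q-3))*(Q^2*(Q+1)*(Q-3))^2*(Q^2 - Q*R - 3*Q - 2*R + 2)" unfolding h_a02 h_a03 h_a12 h_a23 ..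
  also have "\<dots> = (R^2 - (17*Q-1)*(Q-1)) * (2*Q^14 - 2*Q^13*R + 14*Q^12*R - 80*Q^12 - 2*Q^11*R + 48*Q^11 - 162*Q^10*R + 1076*Q^10 + 186*Q^9*R - 864*Q^9 + 714*Q^8*R - 6016*Q^8 - 934*Q^7*R + 3632*Q^7 - 1574*Q^6*R + 15866*Q^6 + 1616*Q^5*R - 2048*Q^5 + 1872*Q^4*R - 17856*Q^4 - 864*Q^3*R - 6912*Q^3 - 864*Q^2*R + 864*Q^2)" by algebra
  also have "\<dots> = 0" using R2 by simp
  finally have "((2*Q*(Q-3))*(2*(Q+1)*(Q-3))^2*(Q^2*(Q+1)*(Q-3))^2*(2*Q*(Q+1))) * (a02*a03*a23 + a02*a12*a23 - a03^2 + a12^2) = 0" .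
  moreover have "(2*Q*(Q-3))*(2*(Q+1)*(Q-3))^2*(Q^2*(Q+1)*(Q-3))^2*(2*Q*(Q+1)) \<noteq> 0" using nz by (simp only: mult_eq_0_iff power_eq_0_iff de_Morgan_disj) simp
  ultimately show ?thesis by simp
qed

lemma E2:
  fixes Q R u0 a02 a03 a12 a23 :: complex
  assumes nz: "Q \<noteq> 0" "Q+1 \<noteq> 0" "Q-3 \<noteq> 0" and R2: "R^2 = (17*Q-1)*(Q-1)" and h_u0: "(2*Q*(Q+1))*u0 = (0 - Q^2 + Q*R + 3*Q + 2*R - 2)" and h_a02: "(2*Q*(Q-3))*a02 = (Q^2 - Q*R + Q + 2*R - 2)" and h_a03: "(2*(Q+1)*(Q-3))*a03 = (5*Q^2 - Q*R - 2*Q + R - 19)" and h_a12: "(Q^2*(Q+1)*(Q-3))*a12 = (0 - 2*Q^4 + 4*Q^3 + 8*Q^2 + 2*Q*R - 20*Q - 2*R + 2)" and h_a23: "(2*Q*(Q+1))*a23 = (Q^2 - Q*R - 3*Q - 2*R + 2)"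
  shows "(u0*a02^2 + u0*a02*a12*a23 + u0*a12^2 - a02^2*a23 + 2*a02*a03 - 2*a02*a12 + a03*a12*a23) = 0"
proof -
  have "((2*Q*(Q+1))*(2*Q*(Q-3))^2*(2*(Q+1)*(Q-3))*(Q^2*(Q+1)*(Q-3))^2*(2*Q*(Q+1))) * (u0*a02^2 + u0*a02*a12*a23 + u0*a12^2 - a02^2*a23 + 2*a02*a03 - 2*a02*a12 + a03*a12*a23) = (1)*(2*Q*(Q+1))*(2*Q*(Q-3))^2*((2*(Q+1)*(Q-3))*a03)*((Q^2*(Q+1)*(Q-3))*a12)*(Q^2*(Q+1)*(Q-3))*((2*Q*(Q+1))*a23) + (0 - 2)*(2*Q*(Q+1))*((2*Q*(Q-3))*a02)*(2*Q*(Q-3))*(2*(Q+1)*(Q-3))*((Q^2*(Q+1)*(Q-3))*a12)*(Q^2*(Q+1)*(Q-3))*(2*Q*(Q+1)) + (2)*(2*Q*(Q+1))*((2*Q*(Q-3))*a02)*(2*Q*(Q-3))*((2*(Q+1)*(Q-3))*a03)*(Q^2*(Q+1)*(Q-3))^2*(2*Q*(Q+1)) + (0 - 1)*(2*Q*(Q+1))*((2*Q*(Q-3))*a02)^2*(2*(Q+1)*(Q-3))*(Q^2*(Q+1)*(Q-3))^2*((2*Q*(Q+1))*a23) + (1)*((2*Q*(Q+1))*u0)*(2*Q*(Q-3))^2*(2*(Q+1)*(Q-3))*((Q^2*(Q+1)*(Q-3))*a12)^2*(2*Q*(Q+1)) + (1)*((2*Q*(Q+1))*u0)*((2*Q*(Q-3))*a02)*(2*Q*(Q-3))*(2*(Q+1)*(Q-3))*((Q^2*(Q+1)*(Q-3))*a12)*(Q^2*(Q+1)*(Q-3))*((2*Q*(Q+1))*a23)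 + (1)*((2*Q*(Q+1))*u0)*((2*Q*(Q-3))*a02)^2*(2*(Q+1)*(Q-3))*(Q^2*(Q+1)*(Q-3))^2*(2*Q*(Q+1))" by algebra
  also have "\<dots> = (1)*(2*Q*(Q+1))*(2*Q*(Q-3))^2*(5*Q^2 - Q*R - 2*Q + R - 19)*(0 - 2*Q^4 + 4*Q^3 + 8*Q^2 + 2*Q*R - 20*Q - 2*R + 2)*(Q^2*(Q+1)*(Q-3))*(Q^2 - Q*R - 3*Q - 2*R + 2) + (0 - 2)*(2*Q*(Q+1))*(Q^2 - Q*R + Q + 2*R - 2)*(2*Q*(Q-3))*(2*(Q+1)*(Q-3))*(0 - 2*Q^4 + 4*Q^3 + 8*Q^2 + 2*Q*R - 20*Q - 2*R + 2)*(Q^2*(Q+1)*(Q-3))*(2*Q*(Q+1)) + (2)*(2*Q*(Q+1))*(Q^2 - Q*R + Q + 2*R - 2)*(2*Q*(Q-3))*(5*Q^2 - Q*R - 2*Q + R - 19)*(Q^2*(Q+1)*(Q-3))^2*(2*Q*(Q+1)) + (0 - 1)*(2*Q*(Q+1))*(Q^2 - Q*R + Q + 2*R - 2)^2*(2*(Q+1)*(Q-3))*(Q^2*(Q+1)*(Q-3))^2*(Q^2 - Q*R - 3*Q - 2*R + 2) + (1)*(0 - Q^2 + Q*R + 3*Q + 2*R - 2)*(2*Q*(Q-3))^2*(2*(Q+1)*(Q-3))*(0 - 2*Q^4 + 4*Q^3 + 8*Q^2 + 2*Q*R - 20*Q - 2*R + 2)^2*(2*Q*(Q+1)) + (1)*(0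 - Q^2 + Q*R + 3*Q + 2*R - 2)*(Q^2 - Q*R + Q + 2*R - 2)*(2*Q*(Q-3))*(2*(Q+1)*(Q-3))*(0 - 2*Q^4 + 4*Q^3 + 8*Q^2 + 2*Q*R - 20*Q - 2*R + 2)*(Q^2*(Q+1)*(Q-3))*(Q^2 - Q*R - 3*Q - 2*R + 2) + (1)*(0 - Q^2 + Q*R + 3*Q + 2*R - 2)*(Q^2 - Q*R + Q + 2*R - 2)^2*(2*(Q+1)*(Q-3))*(Q^2*(Q+1)*(Q-3))^2*(2*Q*(Q+1))" unfolding h_u0 h_a02 h_a03 h_a12 h_a23 ..
  also have "\<dots> = (R^2 - (17*Q-1)*(Q-1)) * (0 - 64*Q^15 + 472*Q^14 + 32*Q^13*R - 384*Q^13 + 8*Q^12*R^2 - 224*Q^12*R - 4272*Q^12 - 48*Q^11*R^2 + 8656*Q^11 - 24*Q^10*R^2 + 2848*Q^10*R + 9376*Q^10 + 528*Q^9*R^2 - 3520*Q^9*R - 32944*Q^9 - 264*Q^8*R^2 - 11808*Q^8*R + 7248*Q^8 - 2064*Q^7*R^2 + 17792*Q^7*R + 36976*Q^7 + 1144*Q^6*R^2 + 20320*Q^6*R - 30968*Q^6 + 3312*Q^5*R^2 - 23904*Q^5*R - 10512*Q^5 - 864*Q^4*R^2 - 17280*Q^4*R + 18144*Q^4 - 1728*Q^3*R^2 + 3456*Q^3*R - 1728*Q^3)" by algebra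
  also have "\<dots> = 0" using R2 by simp
  finally have "((2*Q*(Q+1))*(2*Q*(Q-3))^2*(2*(Q+1)*(Q-3))*(Q^2*(Q+1)*(Q-3))^2*(2*Q*(Q+1))) * (u0*a02^2 + u0*a02*a12*a23 + u0*a12^2 - a02^2*a23 + 2*a02*a03 - 2*a02*a12 + a03*a12*a23) = 0" .
  moreover have "(2*Q*(Q+1))*(2*Q*(Q-3))^2*(2*(Q+1)*(Q-3))*(Q^2*(Q+1)*(Q-3))^2*(2*Q*(Q+1)) \<noteq> 0" using nz by (simp only: mult_eq_0_iff power_eq_0_iff de_Morgan_disj) simp
  ultimately show ?thesis by simp
qed

lemma ROW0:
  fixes Q R u0 a02 a03 a12 a23 :: complex
  assumes nz: "Q \<noteq> 0" "Q+1 \<noteq> 0" "Q-3 \<noteq> 0" and R2: "R^2 = (17*Q-1)*(Q-1)" and h_u0: "(2*Q*(Q+1))*u0 = (0 - Q^2 + Q*R + 3*Q + 2*R - 2)" and h_a02: "(2*Q*(Q-3))*a02 = (Q^2 - Q*R + Q + 2*R - 2)" and h_a03: "(2*(Q+1)*(Q-3))*a03 = (5*Q^2 - Q*R - 2*Q + R - 19)" and h_a12: "(Q^2*(Q+1)*(Q-3))*a12 = (0 - 2*Q^4 + 4*Q^3 + 8*Q^2 + 2*Q*R - 20*Q - 2*R + 2)" and h_a23: "(2*Q*(Q+1))*a23 = (Q^2 - Q*R - 3*Q - 2*R + 2)"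
  shows "(Q^4*a12 + 2*Q^4 - 2*Q^3*a02 - 2*Q^3*a12 + 2*Q^3*a23 - 4*Q^3 + 2*Q^2*u0 + 10*Q^2*a02 - 4*Q^2*a23 + 4*Q^2 - 4*Q*u0 - 8*Q*a02 + 4*Q*a03 - 16*Q - 8*a03 + 24) = 0"
proof -
  have "((2*Q*(Q+1))*(2*Q*(Q-3))*(2*(Q+1)*(Q-3))*(Q^2*(Q+1)*(Q-3))*(2*Q*(Q+1))) * (Q^4*a12 + 2*Q^4 - 2*Q^3*a02 - 2*Q^3*a12 + 2*Q^3*a23 - 4*Q^3 + 2*Q^2*u0 + 10*Q^2*a02 - 4*Q^2*a23 + 4*Q^2 - 4*Q*u0 - 8*Q*a02 + 4*Q*a03 - 16*Q - 8*a03 + 24) = (24)*(2*Q*(Q+1))*(2*Q*(Q-3))*(2*(Q+1)*(Q-3))*(Q^2*(Q+1)*(Q-3))*(2*Q*(Q+1)) + (0 - 8)*(2*Q*(Q+1))*(2*Q*(Q-3))*((2*(Q+1)*(Q-3))*a03)*(Q^2*(Q+1)*(Q-3))*(2*Q*(Q+1)) + (0 - 16*Q)*(2*Q*(Q+1))*(2*Q*(Q-3))*(2*(Q+1)*(Q-3))*(Q^2*(Q+1)*(Q-3))*(2*Q*(Q+1)) + (4*Q)*(2*Q*(Q+1))*(2*Q*(Q-3))*((2*(Q+1)*(Q-3))*a03)*(Q^2*(Q+1)*(Q-3))*(2*Q*(Q+1)) + (0 - 8*Q)*(2*Q*(Q+1))*((2*Q*(Q-3))*a02)*(2*(Q+1)*(Q-3))*(Q^2*(Q+1)*(Q-3))*(2*Q*(Q+1))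 + (0 - 4*Q)*((2*Q*(Q+1))*u0)*(2*Q*(Q-3))*(2*(Q+1)*(Q-3))*(Q^2*(Q+1)*(Q-3))*(2*Q*(Q+1)) + (4*Q^2)*(2*Q*(Q+1))*(2*Q*(Q-3))*(2*(Q+1)*(Q-3))*(Q^2*(Q+1)*(Q-3))*(2*Q*(Q+1)) + (0 - 4*Q^2)*(2*Q*(Q+1))*(2*Q*(Q-3))*(2*(Q+1)*(Q-3))*(Q^2*(Q+1)*(Q-3))*((2*Q*(Q+1))*a23) + (10*Q^2)*(2*Q*(Q+1))*((2*Q*(Q-3))*a02)*(2*(Q+1)*(Q-3))*(Q^2*(Q+1)*(Q-3))*(2*Q*(Q+1)) + (2*Q^2)*((2*Q*(Q+1))*u0)*(2*Q*(Q-3))*(2*(Q+1)*(Q-3))*(Q^2*(Q+1)*(Q-3))*(2*Q*(Q+1)) + (0 - 4*Q^3)*(2*Q*(Q+1))*(2*Q*(Q-3))*(2*(Q+1)*(Q-3))*(Q^2*(Q+1)*(Q-3))*(2*Q*(Q+1)) + (2*Q^3)*(2*Q*(Q+1))*(2*Q*(Q-3))*(2*(Q+1)*(Q-3))*(Q^2*(Q+1)*(Q-3))*((2*Q*(Q+1))*a23) + (0 - 2*Q^3)*(2*Q*(Q+1))*(2*Q*(Q-3))*(2*(Q+1)*(Q-3))*((Q^2*(Q+1)*(Q-3))*a12)*(2*Q*(Q+1)) + (0 - 2*Q^3)*(2*Q*(Q+1))*((2*Q*(Q-3))*a02)*(2*(Q+1)*(Q-3))*(Q^2*(Q+1)*(Q-3))*(2*Q*(Q+1))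 + (2*Q^4)*(2*Q*(Q+1))*(2*Q*(Q-3))*(2*(Q+1)*(Q-3))*(Q^2*(Q+1)*(Q-3))*(2*Q*(Q+1)) + (Q^4)*(2*Q*(Q+1))*(2*Q*(Q-3))*(2*(Q+1)*(Q-3))*((Q^2*(Q+1)*(Q-3))*a12)*(2*Q*(Q+1))" by algebra
  also have "\<dots> = (24)*(2*Q*(Q+1))*(2*Q*(Q-3))*(2*(Q+1)*(Q-3))*(Q^2*(Q+1)*(Q-3))*(2*Q*(Q+1)) + (0 - 8)*(2*Q*(Q+1))*(2*Q*(Q-3))*(5*Q^2 - Q*R - 2*Q + R - 19)*(Q^2*(Q+1)*(Q-3))*(2*Q*(Q+1)) + (0 - 16*Q)*(2*Q*(Q+1))*(2*Q*(Q-3))*(2*(Q+1)*(Q-3))*(Q^2*(Q+1)*(Q-3))*(2*Q*(Q+1)) + (4*Q)*(2*Q*(Q+1))*(2*Q*(Q-3))*(5*Q^2 - Q*R - 2*Q + R - 19)*(Q^2*(Q+1)*(Q-3))*(2*Q*(Q+1)) + (0 - 8*Q)*(2*Q*(Q+1))*(Q^2 - Q*R + Q + 2*R - 2)*(2*(Q+1)*(Q-3))*(Q^2*(Q+1)*(Q-3))*(2*Q*(Q+1)) + (0 - 4*Q)*(0 - Q^2 + Q*R + 3*Q + 2*R - 2)*(2*Q*(Q-3))*(2*(Q+1)*(Q-3))*(Q^2*(Q+1)*(Q-3))*(2*Q*(Q+1)) + (4*Q^2)*(2*Q*(Q+1))*(2*Q*(Q-3))*(2*(Q+1)*(Q-3))*(Q^2*(Q+1)*(Q-3))*(2*Q*(Q+1))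 + (0 - 4*Q^2)*(2*Q*(Q+1))*(2*Q*(Q-3))*(2*(Q+1)*(Q-3))*(Q^2*(Q+1)*(Q-3))*(Q^2 - Q*R - 3*Q - 2*R + 2) + (10*Q^2)*(2*Q*(Q+1))*(Q^2 - Q*R + Q + 2*R - 2)*(2*(Q+1)*(Q-3))*(Q^2*(Q+1)*(Q-3))*(2*Q*(Q+1)) + (2*Q^2)*(0 - Q^2 + Q*R + 3*Q + 2*R - 2)*(2*Q*(Q-3))*(2*(Q+1)*(Q-3))*(Q^2*(Q+1)*(Q-3))*(2*Q*(Q+1)) + (0 - 4*Q^3)*(2*Q*(Q+1))*(2*Q*(Q-3))*(2*(Q+1)*(Q-3))*(Q^2*(Q+1)*(Q-3))*(2*Q*(Q+1)) + (2*Q^3)*(2*Q*(Q+1))*(2*Q*(Q-3))*(2*(Q+1)*(Q-3))*(Q^2*(Q+1)*(Q-3))*(Q^2 - Q*R - 3*Q - 2*R + 2) + (0 - 2*Q^3)*(2*Q*(Q+1))*(2*Q*(Q-3))*(2*(Q+1)*(Q-3))*(0 - 2*Q^4 + 4*Q^3 + 8*Q^2 + 2*Q*R - 20*Q - 2*R + 2)*(2*Q*(Q+1)) + (0 - 2*Q^3)*(2*Q*(Q+1))*(Q^2 - Q*R + Q + 2*R - 2)*(2*(Q+1)*(Q-3))*(Q^2*(Q+1)*(Q-3))*(2*Q*(Q+1)) + (2*Q^4)*(2*Q*(Q+1))*(2*Q*(Q-3))*(2*(Q+1)*(Q-3))*(Q^2*(Q+1)*(Q-3))*(2*Q*(Q+1))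 + (Q^4)*(2*Q*(Q+1))*(2*Q*(Q-3))*(2*(Q+1)*(Q-3))*(0 - 2*Q^4 + 4*Q^3 + 8*Q^2 + 2*Q*R - 20*Q - 2*R + 2)*(2*Q*(Q+1))" unfolding h_u0 h_a02 h_a03 h_a12 h_a23 ..
  also have "\<dots> = (R^2 - (17*Q-1)*(Q-1)) * 0" by algebra
  also have "\<dots> = 0" using R2 by simp
  finally have "((2*Q*(Q+1))*(2*Q*(Q-3))*(2*(Q+1)*(Q-3))*(Q^2*(Q+1)*(Q-3))*(2*Q*(Q+1))) * (Q^4*a12 + 2*Q^4 - 2*Q^3*a02 - 2*Q^3*a12 + 2*Q^3*a23 - 4*Q^3 + 2*Q^2*u0 + 10*Q^2*a02 - 4*Q^2*a23 + 4*Q^2 - 4*Q*u0 - 8*Q*a02 + 4*Q*a03 - 16*Q - 8*a03 + 24) = 0" .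
  moreover have "(2*Q*(Q+1))*(2*Q*(Q-3))*(2*(Q+1)*(Q-3))*(Q^2*(Q+1)*(Q-3))*(2*Q*(Q+1)) \<noteq> 0" using nz by (simp only: mult_eq_0_iff power_eq_0_iff de_Morgan_disj) simp
  ultimately show ?thesis by simp
qed

lemma ROW1:
  fixes Q R u0 a03 a12 a23 :: complex
  assumes nz: "Q \<noteq> 0" "Q+1 \<noteq> 0" "Q-3 \<noteq> 0" and R2: "R^2 = (17*Q-1)*(Q-1)" and h_u0: "(2*Q*(Q+1))*u0 = (0 - Q^2 + Q*R + 3*Q + 2*R - 2)" and h_a03: "(2*(Q+1)*(Q-3))*a03 = (5*Q^2 - Q*R - 2*Q + R - 19)" and h_a12: "(Q^2*(Q+1)*(Q-3))*a12 = (0 - 2*Q^4 + 4*Q^3 + 8*Q^2 + 2*Q*R - 20*Q - 2*R + 2)" and h_a23: "(2*Q*(Q+1))*a23 = (Q^2 - Q*R - 3*Q - 2*R + 2)"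
  shows "(0 - Q^2*a12 - 2*Q^2 + 2*Q*u0 + 2*Q*a23 - 4*a03 + 12) = 0"
proof -
  have "((2*Q*(Q+1))*(2*(Q+1)*(Q-3))*(Q^2*(Q+1)*(Q-3))*(2*Q*(Q+1))) * (0 - Q^2*a12 - 2*Q^2 + 2*Q*u0 + 2*Q*a23 - 4*a03 + 12) = (12)*(2*Q*(Q+1))*(2*(Q+1)*(Q-3))*(Q^2*(Q+1)*(Q-3))*(2*Q*(Q+1)) + (0 - 4)*(2*Q*(Q+1))*((2*(Q+1)*(Q-3))*a03)*(Q^2*(Q+1)*(Q-3))*(2*Q*(Q+1)) + (2*Q)*(2*Q*(Q+1))*(2*(Q+1)*(Q-3))*(Q^2*(Q+1)*(Q-3))*((2*Q*(Q+1))*a23) + (2*Q)*((2*Q*(Q+1))*u0)*(2*(Q+1)*(Q-3))*(Q^2*(Q+1)*(Q-3))*(2*Q*(Q+1)) + (0 - 2*Q^2)*(2*Q*(Q+1))*(2*(Q+1)*(Q-3))*(Q^2*(Q+1)*(Q-3))*(2*Q*(Q+1)) + (0 - Q^2)*(2*Q*(Q+1))*(2*(Q+1)*(Q-3))*((Q^2*(Q+1)*(Q-3))*a12)*(2*Q*(Q+1))" by algebra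
  also have "\<dots> = (12)*(2*Q*(Q+1))*(2*(Q+1)*(Q-3))*(Q^2*(Q+1)*(Q-3))*(2*Q*(Q+1)) + (0 - 4)*(2*Q*(Q+1))*(5*Q^2 - Q*R - 2*Q + R - 19)*(Q^2*(Q+1)*(Q-3))*(2*Q*(Q+1)) + (2*Q)*(2*Q*(Q+1))*(2*(Q+1)*(Q-3))*(Q^2*(Q+1)*(Q-3))*(Q^2 - Q*R - 3*Q - 2*R + 2) + (2*Q)*(0 - Q^2 + Q*R + 3*Q + 2*R - 2)*(2*(Q+1)*(Q-3))*(Q^2*(Q+1)*(Q-3))*(2*Q*(Q+1)) + (0 - 2*Q^2)*(2*Q*(Q+1))*(2*(Q+1)*(Q-3))*(Q^2*(Q+1)*(Q-3))*(2*Q*(Q+1)) + (0 - Q^2)*(2*Q*(Q+1))*(2*(Q+1)*(Q-3))*(0 - 2*Q^4 + 4*Q^3 + 8*Q^2 + 2*Q*R - 20*Q - 2*R + 2)*(2*Q*(Q+1))" unfolding h_u0 h_a03 h_a12 h_a23 ..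
  also have "\<dots> = (R^2 - (17*Q-1)*(Q-1)) * 0" by algebra
  also have "\<dots> = 0" using R2 by simp
  finally have "((2*Q*(Q+1))*(2*(Q+1)*(Q-3))*(Q^2*(Q+1)*(Q-3))*(2*Q*(Q+1))) * (0 - Q^2*a12 - 2*Q^2 + 2*Q*u0 + 2*Q*a23 - 4*a03 + 12) = 0" .
  moreover have "(2*Q*(Q+1))*(2*(Q+1)*(Q-3))*(Q^2*(Q+1)*(Q-3))*(2*Q*(Q+1)) \<noteq> 0" using nz by (simp only: mult_eq_0_iff power_eq_0_iff de_Morgan_disj) simp
  ultimately show ?thesis by simp
qed

lemma ROW2:
  fixes Q R u0 a02 a03 a12 a23 :: complex
  assumes nz: "Q \<noteq> 0" "Q+1 \<noteq> 0" "Q-3 \<noteq> 0" and R2: "R^2 = (17*Q-1)*(Q-1)" and h_u0: "(2*Q*(Q+1))*u0 = (0 - Q^2 + Q*R + 3*Q + 2*R - 2)" and h_a02: "(2*Q*(Q-3))*a02 = (Q^2 - Q*R + Q + 2*R - 2)" and h_a03: "(2*(Q+1)*(Q-3))*a03 = (5*Q^2 - Q*R - 2*Q + R - 19)" and h_a12: "(Q^2*(Q+1)*(Q-3))*a12 = (0 - 2*Q^4 + 4*Q^3 + 8*Q^2 + 2*Q*R - 20*Q - 2*R + 2)" and h_a23: "(2*Q*(Q+1))*a23 = (Q^2 - Q*R - 3*Q - 2*R + 2)"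
  shows "(2*Q^2*a02 + Q^2*a12 - 2*Q^2*a23 + 2*Q^2 - 2*Q*u0 - 10*Q*a02 + 4*Q*a03 - 2*Q*a12 + 4*Q*a23 - 20*Q + 4*u0 + 8*a02 - 8*a03 + 28) = 0"
proof -
  have "((2*Q*(Q+1))*(2*Q*(Q-3))*(2*(Q+1)*(Q-3))*(Q^2*(Q+1)*(Q-3))*(2*Q*(Q+1))) * (2*Q^2*a02 + Q^2*a12 - 2*Q^2*a23 + 2*Q^2 - 2*Q*u0 - 10*Q*a02 + 4*Q*a03 - 2*Q*a12 + 4*Q*a23 - 20*Q + 4*u0 + 8*a02 - 8*a03 + 28) = (28)*(2*Q*(Q+1))*(2*Q*(Q-3))*(2*(Q+1)*(Q-3))*(Q^2*(Q+1)*(Q-3))*(2*Q*(Q+1)) + (0 - 8)*(2*Q*(Q+1))*(2*Q*(Q-3))*((2*(Q+1)*(Q-3))*a03)*(Q^2*(Q+1)*(Q-3))*(2*Q*(Q+1)) + (8)*(2*Q*(Q+1))*((2*Q*(Q-3))*a02)*(2*(Q+1)*(Q-3))*(Q^2*(Q+1)*(Q-3))*(2*Q*(Q+1)) + (4)*((2*Q*(Q+1))*u0)*(2*Q*(Q-3))*(2*(Q+1)*(Q-3))*(Q^2*(Q+1)*(Q-3))*(2*Q*(Q+1)) + (0 - 20*Q)*(2*Q*(Q+1))*(2*Q*(Q-3))*(2*(Q+1)*(Q-3))*(Q^2*(Q+1)*(Q-3))*(2*Q*(Q+1)) + (4*Q)*(2*Q*(Q+1))*(2*Q*(Q-3))*(2*(Q+1)*(Q-3))*(Q^2*(Q+1)*(Q-3))*((2*Q*(Q+1))*a23)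 + (0 - 2*Q)*(2*Q*(Q+1))*(2*Q*(Q-3))*(2*(Q+1)*(Q-3))*((Q^2*(Q+1)*(Q-3))*a12)*(2*Q*(Q+1)) + (4*Q)*(2*Q*(Q+1))*(2*Q*(Q-3))*((2*(Q+1)*(Q-3))*a03)*(Q^2*(Q+1)*(Q-3))*(2*Q*(Q+1)) + (0 - 10*Q)*(2*Q*(Q+1))*((2*Q*(Q-3))*a02)*(2*(Q+1)*(Q-3))*(Q^2*(Q+1)*(Q-3))*(2*Q*(Q+1)) + (0 - 2*Q)*((2*Q*(Q+1))*u0)*(2*Q*(Q-3))*(2*(Q+1)*(Q-3))*(Q^2*(Q+1)*(Q-3))*(2*Q*(Q+1)) + (2*Q^2)*(2*Q*(Q+1))*(2*Q*(Q-3))*(2*(Q+1)*(Q-3))*(Q^2*(Q+1)*(Q-3))*(2*Q*(Q+1)) + (0 - 2*Q^2)*(2*Q*(Q+1))*(2*Q*(Q-3))*(2*(Q+1)*(Q-3))*(Q^2*(Q+1)*(Q-3))*((2*Q*(Q+1))*a23) + (Q^2)*(2*Q*(Q+1))*(2*Q*(Q-3))*(2*(Q+1)*(Q-3))*((Q^2*(Q+1)*(Q-3))*a12)*(2*Q*(Q+1)) + (2*Q^2)*(2*Q*(Q+1))*((2*Q*(Q-3))*a02)*(2*(Q+1)*(Q-3))*(Q^2*(Q+1)*(Q-3))*(2*Q*(Q+1))" by algebra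
  also have "\<dots> = (28)*(2*Q*(Q+1))*(2*Q*(Q-3))*(2*(Q+1)*(Q-3))*(Q^2*(Q+1)*(Q-3))*(2*Q*(Q+1)) + (0 - 8)*(2*Q*(Q+1))*(2*Q*(Q-3))*(5*Q^2 - Q*R - 2*Q + R - 19)*(Q^2*(Q+1)*(Q-3))*(2*Q*(Q+1)) + (8)*(2*Q*(Q+1))*(Q^2 - Q*R + Q + 2*R - 2)*(2*(Q+1)*(Q-3))*(Q^2*(Q+1)*(Q-3))*(2*Q*(Q+1)) + (4)*(0 - Q^2 + Q*R + 3*Q + 2*R - 2)*(2*Q*(Q-3))*(2*(Q+1)*(Q-3))*(Q^2*(Q+1)*(Q-3))*(2*Q*(Q+1)) + (0 - 20*Q)*(2*Q*(Q+1))*(2*Q*(Q-3))*(2*(Q+1)*(Q-3))*(Q^2*(Q+1)*(Q-3))*(2*Q*(Q+1)) + (4*Q)*(2*Q*(Q+1))*(2*Q*(Q-3))*(2*(Q+1)*(Q-3))*(Q^2*(Q+1)*(Q-3))*(Q^2 - Q*R - 3*Q - 2*R + 2) + (0 - 2*Q)*(2*Q*(Q+1))*(2*Q*(Q-3))*(2*(Q+1)*(Q-3))*(0 - 2*Q^4 + 4*Q^3 + 8*Q^2 + 2*Q*R - 20*Q - 2*R + 2)*(2*Q*(Q+1)) + (4*Q)*(2*Q*(Q+1))*(2*Q*(Q-3))*(5*Q^2 - Q*R - 2*Q + R - 19)*(Q^2*(Q+1)*(Q-3))*(2*Q*(Q+1)) + (0 - 10*Q)*(2*Q*(Q+1))*(Q^2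 - Q*R + Q + 2*R - 2)*(2*(Q+1)*(Q-3))*(Q^2*(Q+1)*(Q-3))*(2*Q*(Q+1)) + (0 - 2*Q)*(0 - Q^2 + Q*R + 3*Q + 2*R - 2)*(2*Q*(Q-3))*(2*(Q+1)*(Q-3))*(Q^2*(Q+1)*(Q-3))*(2*Q*(Q+1)) + (2*Q^2)*(2*Q*(Q+1))*(2*Q*(Q-3))*(2*(Q+1)*(Q-3))*(Q^2*(Q+1)*(Q-3))*(2*Q*(Q+1)) + (0 - 2*Q^2)*(2*Q*(Q+1))*(2*Q*(Q-3))*(2*(Q+1)*(Q-3))*(Q^2*(Q+1)*(Q-3))*(Q^2 - Q*R - 3*Q - 2*R + 2) + (Q^2)*(2*Q*(Q+1))*(2*Q*(Q-3))*(2*(Q+1)*(Q-3))*(0 - 2*Q^4 + 4*Q^3 + 8*Q^2 + 2*Q*R - 20*Q - 2*R + 2)*(2*Q*(Q+1)) + (2*Q^2)*(2*Q*(Q+1))*(Q^2 - Q*R + Q + 2*R - 2)*(2*(Q+1)*(Q-3))*(Q^2*(Q+1)*(Q-3))*(2*Q*(Q+1))" unfolding h_u0 h_a02 h_a03 h_a12 h_a23 ..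
  also have "\<dots> = (R^2 - (17*Q-1)*(Q-1)) * 0" by algebra
  also have "\<dots> = 0" using R2 by simp
  finally have "((2*Q*(Q+1))*(2*Q*(Q-3))*(2*(Q+1)*(Q-3))*(Q^2*(Q+1)*(Q-3))*(2*Q*(Q+1))) * (2*Q^2*a02 + Q^2*a12 - 2*Q^2*a23 + 2*Q^2 - 2*Q*u0 - 10*Q*a02 + 4*Q*a03 - 2*Q*a12 + 4*Q*a23 - 20*Q + 4*u0 + 8*a02 - 8*a03 + 28) = 0" .
  moreover have "(2*Q*(Q+1))*(2*Q*(Q-3))*(2*(Q+1)*(Q-3))*(Q^2*(Q+1)*(Q-3))*(2*Q*(Q+1)) \<noteq> 0" using nz by (simp only: mult_eq_0_iff power_eq_0_iff de_Morgan_disj) simp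
  ultimately show ?thesis by simp
qed

lemma ROW3:
  fixes Q R u0 a03 a12 a23 :: complex
  assumes nz: "Q \<noteq> 0" "Q+1 \<noteq> 0" "Q-3 \<noteq> 0" and R2: "R^2 = (17*Q-1)*(Q-1)" and h_u0: "(2*Q*(Q+1))*u0 = (0 - Q^2 + Q*R + 3*Q + 2*R - 2)" and h_a03: "(2*(Q+1)*(Q-3))*a03 = (5*Q^2 - Q*R - 2*Q + R - 19)" and h_a12: "(Q^2*(Q+1)*(Q-3))*a12 = (0 - 2*Q^4 + 4*Q^3 + 8*Q^2 + 2*Q*R - 20*Q - 2*R + 2)" and h_a23: "(2*Q*(Q+1))*a23 = (Q^2 - Q*R - 3*Q - 2*R + 2)"
  shows "(0 - Q^2*a12 - 2*Q^2 - 2*Q*u0 - 2*Q*a23 - 4*a03 + 12) = 0"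
proof -
  have "((2*Q*(Q+1))*(2*(Q+1)*(Q-3))*(Q^2*(Q+1)*(Q-3))*(2*Q*(Q+1))) * (0 - Q^2*a12 - 2*Q^2 - 2*Q*u0 - 2*Q*a23 - 4*a03 + 12) = (12)*(2*Q*(Q+1))*(2*(Q+1)*(Q-3))*(Q^2*(Q+1)*(Q-3))*(2*Q*(Q+1)) + (0 - 4)*(2*Q*(Q+1))*((2*(Q+1)*(Q-3))*a03)*(Q^2*(Q+1)*(Q-3))*(2*Q*(Q+1)) + (0 - 2*Q)*(2*Q*(Q+1))*(2*(Q+1)*(Q-3))*(Q^2*(Q+1)*(Q-3))*((2*Q*(Q+1))*a23) + (0 - 2*Q)*((2*Q*(Q+1))*u0)*(2*(Q+1)*(Q-3))*(Q^2*(Q+1)*(Q-3))*(2*Q*(Q+1)) + (0 - 2*Q^2)*(2*Q*(Q+1))*(2*(Q+1)*(Q-3))*(Q^2*(Q+1)*(Q-3))*(2*Q*(Q+1)) + (0 - Q^2)*(2*Q*(Q+1))*(2*(Q+1)*(Q-3))*((Q^2*(Q+1)*(Q-3))*a12)*(2*Q*(Q+1))" by algebra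
  also have "\<dots> = (12)*(2*Q*(Q+1))*(2*(Q+1)*(Q-3))*(Q^2*(Q+1)*(Q-3))*(2*Q*(Q+1)) + (0 - 4)*(2*Q*(Q+1))*(5*Q^2 - Q*R - 2*Q + R - 19)*(Q^2*(Q+1)*(Q-3))*(2*Q*(Q+1)) + (0 - 2*Q)*(2*Q*(Q+1))*(2*(Q+1)*(Q-3))*(Q^2*(Q+1)*(Q-3))*(Q^2 - Q*R - 3*Q - 2*R + 2) + (0 - 2*Q)*(0 - Q^2 + Q*R + 3*Q + 2*R - 2)*(2*(Q+1)*(Q-3))*(Q^2*(Q+1)*(Q-3))*(2*Q*(Q+1)) + (0 - 2*Q^2)*(2*Q*(Q+1))*(2*(Q+1)*(Q-3))*(Q^2*(Q+1)*(Q-3))*(2*Q*(Q+1)) + (0 - Q^2)*(2*Q*(Q+1))*(2*(Q+1)*(Q-3))*(0 - 2*Q^4 + 4*Q^3 + 8*Q^2 + 2*Q*R - 20*Q - 2*R + 2)*(2*Q*(Q+1))" unfolding h_u0 h_a03 h_a12 h_a23 ..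
  also have "\<dots> = (R^2 - (17*Q-1)*(Q-1)) * 0" by algebra
  also have "\<dots> = 0" using R2 by simp
  finally have "((2*Q*(Q+1))*(2*(Q+1)*(Q-3))*(Q^2*(Q+1)*(Q-3))*(2*Q*(Q+1))) * (0 - Q^2*a12 - 2*Q^2 - 2*Q*u0 - 2*Q*a23 - 4*a03 + 12) = 0" .
  moreover have "(2*Q*(Q+1))*(2*(Q+1)*(Q-3))*(Q^2*(Q+1)*(Q-3))*(2*Q*(Q+1)) \<noteq> 0" using nz by (simp only: mult_eq_0_iff power_eq_0_iff de_Morgan_disj) simp
  ultimately show ?thesis by simp
qed

lemma rows_iii:
  fixes Q u0 :: complex
  assumes hs: "(Q^2-4)*u0 = (2*Q^2 - 12)" and nz: "(Q^2-4) \<noteq> 0"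
  shows "1 + (Q^2/2 - Q)^2 + (Q^2/2)^2 + (Q-2)^2 + (Q^2/2 - Q)*u0 + (Q^2/2)*(-2) + (Q-2)*u0
             + (Q^2/2 - Q)*(Q^2/2)*(-u0) + (Q^2/2 - Q)*(Q-2)*2 + (Q^2/2)*(Q-2)*(-u0) = Q^2 - 1"
    "1 + (Q/2)^2 + (-Q/2)^2 + (-1)^2 + (Q/2)*u0 + (-Q/2)*(-2) + (-1)*u0
             + (Q/2)*(-Q/2)*(-u0) + (Q/2)*(-1)*2 + (-Q/2)*(-1)*(-u0) = Q^2 - 1"
    "1 + (-Q/2+1)^2 + (-Q/2)^2 + (Q-2)^2 + (-Q/2+1)*u0 + (-Q/2)*(-2) + (Q-2)*u0
             + (-Q/2+1)*(-Q/2)*(-u0) + (-Q/2+1)*(Q-2)*2 + (-Q/2)*(Q-2)*(-u0) = Q^2 - 1"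
    "1 + (-Q/2)^2 + (Q/2)^2 + (-1)^2 + (-Q/2)*u0 + (Q/2)*(-2) + (-1)*u0
             + (-Q/2)*(Q/2)*(-u0) + (-Q/2)*(-1)*2 + (Q/2)*(-1)*(-u0) = Q^2 - 1"
proof -
  show "1 + (Q^2/2 - Q)^2 + (Q^2/2)^2 + (Q-2)^2 + (Q^2/2 - Q)*u0 + (Q^2/2)*(-2) + (Q-2)*u0
             + (Q^2/2 - Q)*(Q^2/2)*(-u0) + (Q^2/2 - Q)*(Q-2)*2 + (Q^2/2)*(Q-2)*(-u0) = Q^2 - 1"
  proof -
    have "4*((1 + (Q^2/2 - Q)^2 + (Q^2/2)^2 + (Q-2)^2 + (Q^2/2 - Q)*u0 + (Q^2/2)*(-2) + (Q-2)*u0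
             + (Q^2/2 - Q)*(Q^2/2)*(-u0) + (Q^2/2 - Q)*(Q-2)*2 + (Q^2/2)*(Q-2)*(-u0)) - (Q^2 - 1)) = (0 - Q^4*u0 + 2*Q^4 + 6*Q^2*u0 - 16*Q^2 - 8*u0 + 24)" by (simp add: field_simps eval_nat_numeral)
    hence "(Q^2-4) * (4*((1 + (Q^2/2 - Q)^2 + (Q^2/2)^2 + (Q-2)^2 + (Q^2/2 - Q)*u0 + (Q^2/2)*(-2) + (Q-2)*u0
             + (Q^2/2 - Q)*(Q^2/2)*(-u0) + (Q^2/2 - Q)*(Q-2)*2 + (Q^2/2)*(Q-2)*(-u0)) - (Q^2 - 1))) = (Q^2-4)*(0 - Q^4*u0 + 2*Q^4 + 6*Q^2*u0 - 16*Q^2 - 8*u0 + 24)" by (rule arg_cong)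
    also have "\<dots> = (2*Q^4 - 16*Q^2 + 24)*(Q^2-4)*1 + (0 - Q^4 + 6*Q^2 - 8)*1*((Q^2-4)*u0)" by algebra
    also have "\<dots> = (2*Q^4 - 16*Q^2 + 24)*(Q^2-4)*1 + (0 - Q^4 + 6*Q^2 - 8)*1*((2*Q^2 - 12))" unfolding hs ..
    also have "\<dots> = 0" by algebra
    finally show ?thesis using nz by (metis mult_eq_0_iff right_minus_eq zero_neq_numeral power_eq_0_iff)
  qed
  show "1 + (Q/2)^2 + (-Q/2)^2 + (-1)^2 + (Q/2)*u0 + (-Q/2)*(-2) + (-1)*u0
             + (Q/2)*(-Q/2)*(-u0) + (Q/2)*(-1)*2 + (-Q/2)*(-1)*(-u0) = Q^2 - 1"
  proof -
    have "4*((1 + (Q/2)^2 + (-Q/2)^2 + (-1)^2 + (Q/2)*u0 + (-Q/2)*(-2) + (-1)*u0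
             + (Q/2)*(-Q/2)*(-u0) + (Q/2)*(-1)*2 + (-Q/2)*(-1)*(-u0)) - (Q^2 - 1)) = (Q^2*u0 - 2*Q^2 - 4*u0 + 12)" by (simp add: field_simps eval_nat_numeral)
    hence "(Q^2-4) * (4*((1 + (Q/2)^2 + (-Q/2)^2 + (-1)^2 + (Q/2)*u0 + (-Q/2)*(-2) + (-1)*u0
             + (Q/2)*(-Q/2)*(-u0) + (Q/2)*(-1)*2 + (-Q/2)*(-1)*(-u0)) - (Q^2 - 1))) = (Q^2-4)*(Q^2*u0 - 2*Q^2 - 4*u0 + 12)" by (rule arg_cong)
    also have "\<dots> = (0 - 2*Q^2 + 12)*(Q^2-4)*1 + (Q^2 - 4)*1*((Q^2-4)*u0)" by algebra
    also have "\<dots> = (0 - 2*Q^2 + 12)*(Q^2-4)*1 + (Q^2 - 4)*1*((2*Q^2 - 12))" unfolding hs ..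
    also have "\<dots> = 0" by algebra
    finally show ?thesis using nz by (metis mult_eq_0_iff right_minus_eq zero_neq_numeral power_eq_0_iff)
  qed
  show "1 + (-Q/2+1)^2 + (-Q/2)^2 + (Q-2)^2 + (-Q/2+1)*u0 + (-Q/2)*(-2) + (Q-2)*u0
             + (-Q/2+1)*(-Q/2)*(-u0) + (-Q/2+1)*(Q-2)*2 + (-Q/2)*(Q-2)*(-u0) = Q^2 - 1"
  proof -
    have "4*((1 + (-Q/2+1)^2 + (-Q/2)^2 + (Q-2)^2 + (-Q/2+1)*u0 + (-Q/2)*(-2) + (Q-2)*u0
             + (-Q/2+1)*(-Q/2)*(-u0) + (-Q/2+1)*(Q-2)*2 + (-Q/2)*(Q-2)*(-u0)) - (Q^2 - 1)) = (Q^2*u0 - 2*Q^2 - 4*u0 + 12)" by (simp add: field_simps eval_nat_numeral)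
    hence "(Q^2-4) * (4*((1 + (-Q/2+1)^2 + (-Q/2)^2 + (Q-2)^2 + (-Q/2+1)*u0 + (-Q/2)*(-2) + (Q-2)*u0
             + (-Q/2+1)*(-Q/2)*(-u0) + (-Q/2+1)*(Q-2)*2 + (-Q/2)*(Q-2)*(-u0)) - (Q^2 - 1))) = (Q^2-4)*(Q^2*u0 - 2*Q^2 - 4*u0 + 12)" by (rule arg_cong)
    also have "\<dots> = (0 - 2*Q^2 + 12)*(Q^2-4)*1 + (Q^2 - 4)*1*((Q^2-4)*u0)" by algebra
    also have "\<dots> = (0 - 2*Q^2 + 12)*(Q^2-4)*1 + (Q^2 - 4)*1*((2*Q^2 - 12))" unfolding hs ..
    also have "\<dots> = 0" by algebra
    finally show ?thesis using nz by (metis mult_eq_0_iff right_minus_eq zero_neq_numeral power_eq_0_iff)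
  qed
  show "1 + (-Q/2)^2 + (Q/2)^2 + (-1)^2 + (-Q/2)*u0 + (Q/2)*(-2) + (-1)*u0
             + (-Q/2)*(Q/2)*(-u0) + (-Q/2)*(-1)*2 + (Q/2)*(-1)*(-u0) = Q^2 - 1"
  proof -
    have "4*((1 + (-Q/2)^2 + (Q/2)^2 + (-1)^2 + (-Q/2)*u0 + (Q/2)*(-2) + (-1)*u0
             + (-Q/2)*(Q/2)*(-u0) + (-Q/2)*(-1)*2 + (Q/2)*(-1)*(-u0)) - (Q^2 - 1)) = (Q^2*u0 - 2*Q^2 - 4*u0 + 12)" by (simp add: field_simps eval_nat_numeral)
    hence "(Q^2-4) * (4*((1 + (-Q/2)^2 + (Q/2)^2 + (-1)^2 + (-Q/2)*u0 + (Q/2)*(-2) + (-1)*u0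
             + (-Q/2)*(Q/2)*(-u0) + (-Q/2)*(-1)*2 + (Q/2)*(-1)*(-u0)) - (Q^2 - 1))) = (Q^2-4)*(Q^2*u0 - 2*Q^2 - 4*u0 + 12)" by (rule arg_cong)
    also have "\<dots> = (0 - 2*Q^2 + 12)*(Q^2-4)*1 + (Q^2 - 4)*1*((Q^2-4)*u0)" by algebra
    also have "\<dots> = (0 - 2*Q^2 + 12)*(Q^2-4)*1 + (Q^2 - 4)*1*((2*Q^2 - 12))" unfolding hs ..
    also have "\<dots> = 0" by algebra
    finally show ?thesis using nz by (metis mult_eq_0_iff right_minus_eq zero_neq_numeral power_eq_0_iff)
  qed
qed

lemma rows_iv:
  fixes Q u0 :: complex
  assumes hs: "(Q^2)*u0 = (0 - 2*Q^2 + 4)" and nz: "(Q^2) \<noteq> 0"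
  shows "1 + (Q^2/2 - Q)^2 + (Q^2/2)^2 + (Q-2)^2 + (Q^2/2 - Q)*2 + (Q^2/2)*u0 + (Q-2)*2
             + (Q^2/2 - Q)*(Q^2/2)*u0 + (Q^2/2 - Q)*(Q-2)*2 + (Q^2/2)*(Q-2)*u0 = Q^2 - 1"
    "1 + (Q/2)^2 + (-Q/2)^2 + (-1)^2 + (Q/2)*2 + (-Q/2)*u0 + (-1)*2
             + (Q/2)*(-Q/2)*u0 + (Q/2)*(-1)*2 + (-Q/2)*(-1)*u0 = Q^2 - 1"
    "1 + (-Q/2+1)^2 + (-Q/2)^2 + (Q-2)^2 + (-Q/2+1)*2 + (-Q/2)*u0 + (Q-2)*2
             + (-Q/2+1)*(-Q/2)*u0 + (-Q/2+1)*(Q-2)*2 + (-Q/2)*(Q-2)*u0 = Q^2 - 1"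
    "1 + (-Q/2)^2 + (Q/2)^2 + (-1)^2 + (-Q/2)*2 + (Q/2)*u0 + (-1)*2
             + (-Q/2)*(Q/2)*u0 + (-Q/2)*(-1)*2 + (Q/2)*(-1)*u0 = Q^2 - 1"
proof -
  show "1 + (Q^2/2 - Q)^2 + (Q^2/2)^2 + (Q-2)^2 + (Q^2/2 - Q)*2 + (Q^2/2)*u0 + (Q-2)*2
             + (Q^2/2 - Q)*(Q^2/2)*u0 + (Q^2/2 - Q)*(Q-2)*2 + (Q^2/2)*(Q-2)*u0 = Q^2 - 1"
  proof -
    have "4*((1 + (Q^2/2 - Q)^2 + (Q^2/2)^2 + (Q-2)^2 + (Q^2/2 - Q)*2 + (Q^2/2)*u0 + (Q-2)*2
             + (Q^2/2 - Q)*(Q^2/2)*u0 + (Q^2/2 - Q)*(Q-2)*2 + (Q^2/2)*(Q-2)*u0) - (Q^2 - 1)) = (Q^4*u0 + 2*Q^4 - 2*Q^2*u0 - 8*Q^2 + 8)" by (simp add: field_simps eval_nat_numeral)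
    hence "(Q^2) * (4*((1 + (Q^2/2 - Q)^2 + (Q^2/2)^2 + (Q-2)^2 + (Q^2/2 - Q)*2 + (Q^2/2)*u0 + (Q-2)*2
             + (Q^2/2 - Q)*(Q^2/2)*u0 + (Q^2/2 - Q)*(Q-2)*2 + (Q^2/2)*(Q-2)*u0) - (Q^2 - 1))) = (Q^2)*(Q^4*u0 + 2*Q^4 - 2*Q^2*u0 - 8*Q^2 + 8)" by (rule arg_cong)
    also have "\<dots> = (2*Q^4 - 8*Q^2 + 8)*(Q^2)*1 + (Q^4 - 2*Q^2)*1*((Q^2)*u0)" by algebra
    also have "\<dots> = (2*Q^4 - 8*Q^2 + 8)*(Q^2)*1 + (Q^4 - 2*Q^2)*1*((0 - 2*Q^2 + 4))" unfolding hs ..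
    also have "\<dots> = 0" by algebra
    finally show ?thesis using nz by (metis mult_eq_0_iff right_minus_eq zero_neq_numeral power_eq_0_iff)
  qed
  show "1 + (Q/2)^2 + (-Q/2)^2 + (-1)^2 + (Q/2)*2 + (-Q/2)*u0 + (-1)*2
             + (Q/2)*(-Q/2)*u0 + (Q/2)*(-1)*2 + (-Q/2)*(-1)*u0 = Q^2 - 1"
  proof -
    have "4*((1 + (Q/2)^2 + (-Q/2)^2 + (-1)^2 + (Q/2)*2 + (-Q/2)*u0 + (-1)*2
             + (Q/2)*(-Q/2)*u0 + (Q/2)*(-1)*2 + (-Q/2)*(-1)*u0) - (Q^2 - 1)) = (0 - Q^2*u0 - 2*Q^2 + 4)" by (simp add: field_simps eval_nat_numeral)
    hence "(Q^2) * (4*((1 + (Q/2)^2 + (-Q/2)^2 + (-1)^2 + (Q/2)*2 + (-Q/2)*u0 + (-1)*2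
             + (Q/2)*(-Q/2)*u0 + (Q/2)*(-1)*2 + (-Q/2)*(-1)*u0) - (Q^2 - 1))) = (Q^2)*(0 - Q^2*u0 - 2*Q^2 + 4)" by (rule arg_cong)
    also have "\<dots> = (0 - 2*Q^2 + 4)*(Q^2)*1 + (0 - Q^2)*1*((Q^2)*u0)" by algebra
    also have "\<dots> = (0 - 2*Q^2 + 4)*(Q^2)*1 + (0 - Q^2)*1*((0 - 2*Q^2 + 4))" unfolding hs ..
    also have "\<dots> = 0" by algebra
    finally show ?thesis using nz by (metis mult_eq_0_iff right_minus_eq zero_neq_numeral power_eq_0_iff)
  qed
  show "1 + (-Q/2+1)^2 + (-Q/2)^2 + (Q-2)^2 + (-Q/2+1)*2 + (-Q/2)*u0 + (Q-2)*2
             + (-Q/2+1)*(-Q/2)*u0 + (-Q/2+1)*(Q-2)*2 + (-Q/2)*(Q-2)*u0 = Q^2 - 1"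
  proof -
    have "4*((1 + (-Q/2+1)^2 + (-Q/2)^2 + (Q-2)^2 + (-Q/2+1)*2 + (-Q/2)*u0 + (Q-2)*2
             + (-Q/2+1)*(-Q/2)*u0 + (-Q/2+1)*(Q-2)*2 + (-Q/2)*(Q-2)*u0) - (Q^2 - 1)) = (0 - Q^2*u0 - 2*Q^2 + 4)" by (simp add: field_simps eval_nat_numeral)
    hence "(Q^2) * (4*((1 + (-Q/2+1)^2 + (-Q/2)^2 + (Q-2)^2 + (-Q/2+1)*2 + (-Q/2)*u0 + (Q-2)*2
             + (-Q/2+1)*(-Q/2)*u0 + (-Q/2+1)*(Q-2)*2 + (-Q/2)*(Q-2)*u0) - (Q^2 - 1))) = (Q^2)*(0 - Q^2*u0 - 2*Q^2 + 4)" by (rule arg_cong)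
    also have "\<dots> = (0 - 2*Q^2 + 4)*(Q^2)*1 + (0 - Q^2)*1*((Q^2)*u0)" by algebra
    also have "\<dots> = (0 - 2*Q^2 + 4)*(Q^2)*1 + (0 - Q^2)*1*((0 - 2*Q^2 + 4))" unfolding hs ..
    also have "\<dots> = 0" by algebra
    finally show ?thesis using nz by (metis mult_eq_0_iff right_minus_eq zero_neq_numeral power_eq_0_iff)
  qed
  show "1 + (-Q/2)^2 + (Q/2)^2 + (-1)^2 + (-Q/2)*2 + (Q/2)*u0 + (-1)*2
             + (-Q/2)*(Q/2)*u0 + (-Q/2)*(-1)*2 + (Q/2)*(-1)*u0 = Q^2 - 1"
  proof -
    have "4*((1 + (-Q/2)^2 + (Q/2)^2 + (-1)^2 + (-Q/2)*2 + (Q/2)*u0 + (-1)*2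
             + (-Q/2)*(Q/2)*u0 + (-Q/2)*(-1)*2 + (Q/2)*(-1)*u0) - (Q^2 - 1)) = (0 - Q^2*u0 - 2*Q^2 + 4)" by (simp add: field_simps eval_nat_numeral)
    hence "(Q^2) * (4*((1 + (-Q/2)^2 + (Q/2)^2 + (-1)^2 + (-Q/2)*2 + (Q/2)*u0 + (-1)*2
             + (-Q/2)*(Q/2)*u0 + (-Q/2)*(-1)*2 + (Q/2)*(-1)*u0) - (Q^2 - 1))) = (Q^2)*(0 - Q^2*u0 - 2*Q^2 + 4)" by (rule arg_cong)
    also have "\<dots> = (0 - 2*Q^2 + 4)*(Q^2)*1 + (0 - Q^2)*1*((Q^2)*u0)" by algebra
    also have "\<dots> = (0 - 2*Q^2 + 4)*(Q^2)*1 + (0 - Q^2)*1*((0 - 2*Q^2 + 4))" unfolding hs ..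
    also have "\<dots> = 0" by algebra
    finally show ?thesis using nz by (metis mult_eq_0_iff right_minus_eq zero_neq_numeral power_eq_0_iff)
  qed
qed

lemma rows_v:
  fixes Q u0 :: complex
  assumes hs: "(Q)*u0 = (0 - 2)" and nz: "(Q) \<noteq> 0"
  shows "1 + (Q^2/2 - Q)^2 + (Q^2/2)^2 + (Q-2)^2 + (Q^2/2 - Q)*u0 + (Q^2/2)*u0 + (Q-2)*2
             + (Q^2/2 - Q)*(Q^2/2)*(u0^2-2) + (Q^2/2 - Q)*(Q-2)*u0 + (Q^2/2)*(Q-2)*u0 = Q^2 - 1"
    "1 + (Q/2)^2 + (-Q/2)^2 + (-1)^2 + (Q/2)*u0 + (-Q/2)*u0 + (-1)*2
             + (Q/2)*(-Q/2)*(u0^2-2) + (Q/2)*(-1)*u0 + (-Q/2)*(-1)*u0 = Q^2 - 1"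
    "1 + (-Q/2+1)^2 + (-Q/2)^2 + (Q-2)^2 + (-Q/2+1)*u0 + (-Q/2)*u0 + (Q-2)*2
             + (-Q/2+1)*(-Q/2)*(u0^2-2) + (-Q/2+1)*(Q-2)*u0 + (-Q/2)*(Q-2)*u0 = Q^2 - 1"
    "1 + (-Q/2)^2 + (Q/2)^2 + (-1)^2 + (-Q/2)*u0 + (Q/2)*u0 + (-1)*2
             + (-Q/2)*(Q/2)*(u0^2-2) + (-Q/2)*(-1)*u0 + (Q/2)*(-1)*u0 = Q^2 - 1"
proof -
  show "1 + (Q^2/2 - Q)^2 + (Q^2/2)^2 + (Q-2)^2 + (Q^2/2 - Q)*u0 + (Q^2/2)*u0 + (Q-2)*2
             + (Q^2/2 - Q)*(Q^2/2)*(u0^2-2) + (Q^2/2 - Q)*(Q-2)*u0 + (Q^2/2)*(Q-2)*u0 = Q^2 - 1"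
  proof -
    have "4*((1 + (Q^2/2 - Q)^2 + (Q^2/2)^2 + (Q-2)^2 + (Q^2/2 - Q)*u0 + (Q^2/2)*u0 + (Q-2)*2
             + (Q^2/2 - Q)*(Q^2/2)*(u0^2-2) + (Q^2/2 - Q)*(Q-2)*u0 + (Q^2/2)*(Q-2)*u0) - (Q^2 - 1)) = (Q^4*u0^2 - 2*Q^3*u0^2 + 4*Q^3*u0 - 8*Q^2*u0 + 4*Q^2 + 4*Q*u0 - 8*Q + 8)" by (simp add: field_simps eval_nat_numeral)
    hence "(Q)^2 * (4*((1 + (Q^2/2 - Q)^2 + (Q^2/2)^2 + (Q-2)^2 + (Q^2/2 - Q)*u0 + (Q^2/2)*u0 + (Q-2)*2
             + (Q^2/2 - Q)*(Q^2/2)*(u0^2-2) + (Q^2/2 - Q)*(Q-2)*u0 + (Q^2/2)*(Q-2)*u0) - (Q^2 - 1))) = (Q)^2*(Q^4*u0^2 - 2*Q^3*u0^2 + 4*Q^3*u0 - 8*Q^2*u0 + 4*Q^2 + 4*Q*u0 - 8*Q + 8)" by (rule arg_cong)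
    also have "\<dots> = (4*Q^2 - 8*Q + 8)*(Q)^2*1 + (4*Q^3 - 8*Q^2 + 4*Q)*(Q)*((Q)*u0) + (Q^4 - 2*Q^3)*1*((Q)*u0)^2" by algebra
    also have "\<dots> = (4*Q^2 - 8*Q + 8)*(Q)^2*1 + (4*Q^3 - 8*Q^2 + 4*Q)*(Q)*((0 - 2)) + (Q^4 - 2*Q^3)*1*((0 - 2))^2" unfolding hs ..
    also have "\<dots> = 0" by algebra
    finally show ?thesis using nz by (metis mult_eq_0_iff right_minus_eq zero_neq_numeral power_eq_0_iff)
  qed
  show "1 + (Q/2)^2 + (-Q/2)^2 + (-1)^2 + (Q/2)*u0 + (-Q/2)*u0 + (-1)*2
             + (Q/2)*(-Q/2)*(u0^2-2) + (Q/2)*(-1)*u0 + (-Q/2)*(-1)*u0 = Q^2 - 1"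
  proof -
    have "4*((1 + (Q/2)^2 + (-Q/2)^2 + (-1)^2 + (Q/2)*u0 + (-Q/2)*u0 + (-1)*2
             + (Q/2)*(-Q/2)*(u0^2-2) + (Q/2)*(-1)*u0 + (-Q/2)*(-1)*u0) - (Q^2 - 1)) = (0 - Q^2*u0^2 + 4)" by (simp add: field_simps eval_nat_numeral)
    hence "(Q)^2 * (4*((1 + (Q/2)^2 + (-Q/2)^2 + (-1)^2 + (Q/2)*u0 + (-Q/2)*u0 + (-1)*2
             + (Q/2)*(-Q/2)*(u0^2-2) + (Q/2)*(-1)*u0 + (-Q/2)*(-1)*u0) - (Q^2 - 1))) = (Q)^2*(0 - Q^2*u0^2 + 4)" by (rule arg_cong)
    also have "\<dots> = (4)*(Q)^2*1 + (0 - Q^2)*1*((Q)*u0)^2" by algebra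
    also have "\<dots> = (4)*(Q)^2*1 + (0 - Q^2)*1*((0 - 2))^2" unfolding hs ..
    also have "\<dots> = 0" by algebra
    finally show ?thesis using nz by (metis mult_eq_0_iff right_minus_eq zero_neq_numeral power_eq_0_iff)
  qed
  show "1 + (-Q/2+1)^2 + (-Q/2)^2 + (Q-2)^2 + (-Q/2+1)*u0 + (-Q/2)*u0 + (Q-2)*2
             + (-Q/2+1)*(-Q/2)*(u0^2-2) + (-Q/2+1)*(Q-2)*u0 + (-Q/2)*(Q-2)*u0 = Q^2 - 1"
  proof -
    have "4*((1 + (-Q/2+1)^2 + (-Q/2)^2 + (Q-2)^2 + (-Q/2+1)*u0 + (-Q/2)*u0 + (Q-2)*2
             + (-Q/2+1)*(-Q/2)*(u0^2-2) + (-Q/2+1)*(Q-2)*u0 + (-Q/2)*(Q-2)*u0) - (Q^2 - 1)) = (Q^2*u0^2 - 4*Q^2*u0 - 2*Q*u0^2 + 8*Q*u0 - 8*Q - 4*u0 + 12)" by (simp add: field_simps eval_nat_numeral)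
    hence "(Q)^2 * (4*((1 + (-Q/2+1)^2 + (-Q/2)^2 + (Q-2)^2 + (-Q/2+1)*u0 + (-Q/2)*u0 + (Q-2)*2
             + (-Q/2+1)*(-Q/2)*(u0^2-2) + (-Q/2+1)*(Q-2)*u0 + (-Q/2)*(Q-2)*u0) - (Q^2 - 1))) = (Q)^2*(Q^2*u0^2 - 4*Q^2*u0 - 2*Q*u0^2 + 8*Q*u0 - 8*Q - 4*u0 + 12)" by (rule arg_cong)
    also have "\<dots> = (0 - 8*Q + 12)*(Q)^2*1 + (0 - 4*Q^2 + 8*Q - 4)*(Q)*((Q)*u0) + (Q^2 - 2*Q)*1*((Q)*u0)^2" by algebra
    also have "\<dots> = (0 - 8*Q + 12)*(Q)^2*1 + (0 - 4*Q^2 + 8*Q - 4)*(Q)*((0 - 2)) + (Q^2 - 2*Q)*1*((0 - 2))^2" unfolding hs ..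
    also have "\<dots> = 0" by algebra
    finally show ?thesis using nz by (metis mult_eq_0_iff right_minus_eq zero_neq_numeral power_eq_0_iff)
  qed
  show "1 + (-Q/2)^2 + (Q/2)^2 + (-1)^2 + (-Q/2)*u0 + (Q/2)*u0 + (-1)*2
             + (-Q/2)*(Q/2)*(u0^2-2) + (-Q/2)*(-1)*u0 + (Q/2)*(-1)*u0 = Q^2 - 1"
  proof -
    have "4*((1 + (-Q/2)^2 + (Q/2)^2 + (-1)^2 + (-Q/2)*u0 + (Q/2)*u0 + (-1)*2
             + (-Q/2)*(Q/2)*(u0^2-2) + (-Q/2)*(-1)*u0 + (Q/2)*(-1)*u0) - (Q^2 - 1)) = (0 - Q^2*u0^2 + 4)" by (simp add: field_simps eval_nat_numeral)
    hence "(Q)^2 * (4*((1 + (-Q/2)^2 + (Q/2)^2 + (-1)^2 + (-Q/2)*u0 + (Q/2)*u0 + (-1)*2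
             + (-Q/2)*(Q/2)*(u0^2-2) + (-Q/2)*(-1)*u0 + (Q/2)*(-1)*u0) - (Q^2 - 1))) = (Q)^2*(0 - Q^2*u0^2 + 4)" by (rule arg_cong)
    also have "\<dots> = (4)*(Q)^2*1 + (0 - Q^2)*1*((Q)*u0)^2" by algebra
    also have "\<dots> = (4)*(Q)^2*1 + (0 - Q^2)*1*((0 - 2))^2" unfolding hs ..
    also have "\<dots> = 0" by algebra
    finally show ?thesis using nz by (metis mult_eq_0_iff right_minus_eq zero_neq_numeral power_eq_0_iff)
  qed
qed


lemma Pq_vals:
  fixes q :: nat
  shows "P_q q 0 0 = 1" "P_q q 1 0 = 1" "P_q q 2 0 = 1" "P_q q 3 0 = 1"
    "P_q q 0 1 = (of_nat q)^2/2 - of_nat q" "P_q q 0 2 = (of_nat q)^2/2" "P_q q 0 3 = of_nat q - 2"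
    "P_q q 1 1 = of_nat q/2" "P_q q 1 2 = - of_nat q/2" "P_q q 1 3 = -1"
    "P_q q 2 1 = - of_nat q/2 + 1" "P_q q 2 2 = - of_nat q/2" "P_q q 2 3 = of_nat q - 2"
    "P_q q 3 1 = - of_nat q/2" "P_q q 3 2 = of_nat q/2" "P_q q 3 3 = -1"
  unfolding P_q_def Let_def by (simp_all add: numeral_eq_Suc)

lemma le3_cases: "(i::nat) \<le> 3 \<Longrightarrow> i = 0 \<or> i = 1 \<or> i = 2 \<or> i = 3" by auto

lemma rows_tu:
  fixes q :: nat and w1 w2 w3 t1 t2 t3 u12 u13 u23 :: complex
  assumes nz: "w1 \<noteq> 0" "w2 \<noteq> 0" "w3 \<noteq> 0" and m: "cmod w1 = 1" "cmod w2 = 1" "cmod w3 = 1"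
   and t: "w1 + 1/w1 = t1" "w2 + 1/w2 = t2" "w3 + 1/w3 = t3" "w1/w2 + w2/w1 = u12"
          "w1/w3 + w3/w1 = u13" "w2/w3 + w3/w2 = u23"
   and R: "\<And>i. i \<le> 3 \<Longrightarrow> 1 + (P_q q i 1)^2 + (P_q q i 2)^2 + (P_q q i 3)^2 + P_q q i 1 * t1
      + P_q q i 2 * t2 + P_q q i 3 * t3 + P_q q i 1 * P_q q i 2 * u12 + P_q q i 1 * P_q q i 3 * u13
      + P_q q i 2 * P_q q i 3 * u23 = n"
   and i: "i \<le> 3"
  shows "(P_q q i 0 + P_q q i 1*w1 + P_q q i 2*w2 + P_q q i 3*w3) *
        (P_q q i 0 + P_q q i 1*cnj w1 + P_q q i 2*cnj w2 + P_q q i 3*cnj w3) = n"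
proof -
  have p0: "P_q q i 0 = 1" using le3_cases[OF i] Pq_vals by auto
  have c: "cnj w1 = 1/w1" "cnj w2 = 1/w2" "cnj w3 = 1/w3" using m cnj_unit by auto
  show ?thesis unfolding c p0 expand3[OF nz] using R[OF i] t by simp
qed


lemma suff_lemma:
  fixes q :: nat and Q :: complex and A :: "nat \<Rightarrow> complex^'a::finite^'a"
  assumes Q: "Q = of_nat q" and card: "of_nat CARD('a) = Q^2 - 1"
    and sch: "sym_assoc_scheme 3 A" and eig: "first_eigenmatrix 3 A (P_q q)"
    and nz: "w1 \<noteq> 0" "w2 \<noteq> 0" "w3 \<noteq> 0"
    and m: "cmod w1 = 1" "cmod w2 = 1" "cmod w3 = 1"
    and t: "w1 + 1/w1 = t1" "w2 + 1/w2 = t2" "w3 + 1/w3 = t3" "w1/w2 + w2/w1 = u12"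
          "w1/w3 + w3/w1 = u13" "w2/w3 + w3/w2 = u23"
    and R0: "1 + (Q^2/2 - Q)^2 + (Q^2/2)^2 + (Q-2)^2 + (Q^2/2 - Q)*t1 + (Q^2/2)*t2 + (Q-2)*t3
             + (Q^2/2 - Q)*(Q^2/2)*u12 + (Q^2/2 - Q)*(Q-2)*u13 + (Q^2/2)*(Q-2)*u23 = Q^2 - 1"
    and R1: "1 + (Q/2)^2 + (-Q/2)^2 + (-1)^2 + (Q/2)*t1 + (-Q/2)*t2 + (-1)*t3
             + (Q/2)*(-Q/2)*u12 + (Q/2)*(-1)*u13 + (-Q/2)*(-1)*u23 = Q^2 - 1"
    and R2: "1 + (-Q/2+1)^2 + (-Q/2)^2 + (Q-2)^2 + (-Q/2+1)*t1 + (-Q/2)*t2 + (Q-2)*t3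
             + (-Q/2+1)*(-Q/2)*u12 + (-Q/2+1)*(Q-2)*u13 + (-Q/2)*(Q-2)*u23 = Q^2 - 1"
    and R3: "1 + (-Q/2)^2 + (Q/2)^2 + (-1)^2 + (-Q/2)*t1 + (Q/2)*t2 + (-1)*t3
             + (-Q/2)*(Q/2)*u12 + (-Q/2)*(-1)*u13 + (Q/2)*(-1)*u23 = Q^2 - 1"
  shows "complex_hadamard (A 0 + scale_cmat w1 (A 1) + scale_cmat w2 (A 2) + scale_cmat w3 (A 3))"
proof (rule hadamard_suff[OF sch eig m])
  have PQ: "P_q q 0 1 = Q^2/2 - Q" "P_q q 0 2 = Q^2/2" "P_q q 0 3 = Q - 2"
    "P_q q 1 1 = Q/2" "P_q q 1 2 = - Q/2" "P_q q 1 3 = -1"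
    "P_q q 2 1 = - Q/2 + 1" "P_q q 2 2 = - Q/2" "P_q q 2 3 = Q - 2"
    "P_q q 3 1 = - Q/2" "P_q q 3 2 = Q/2" "P_q q 3 3 = -1"
    unfolding Q by (rule Pq_vals)+
  fix i :: nat assume i: "i \<le> 3"
  show "(P_q q i 0 + P_q q i 1*w1 + P_q q i 2*w2 + P_q q i 3*w3) *
      (P_q q i 0 + P_q q i 1*cnj w1 + P_q q i 2*cnj w2 + P_q q i 3*cnj w3) = of_nat CARD('a)"
  proof (rule rows_tu[OF nz m t _ i])
    fix j :: nat assume j: "j \<le> 3"
    show "1 + (P_q q j 1)^2 + (P_q q j 2)^2 + (P_q q j 3)^2 + P_q q j 1 * t1
    + P_q q j 2 * t2 + P_q q j 3 * t3 + P_q q j 1 * P_q q j 2 * u12 + P_q q j 1 * P_q q j 3 * u13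
    + P_q q j 2 * P_q q j 3 * u23 = of_nat CARD('a)"
      using le3_cases[OF j]
    proof (elim disjE)
      assume j0: "j = 0" show ?thesis unfolding j0 PQ card by (rule R0)
    next
      assume j0: "j = 1" show ?thesis unfolding j0 PQ card by (rule R1)
    next
      assume j0: "j = 2" show ?thesis unfolding j0 PQ card by (rule R2)
    next
      assume j0: "j = 3" show ?thesis unfolding j0 PQ card by (rule R3)
    qed
  qed
qed

lemma vi_unfold:
  assumes "cond_vi q r w1 w2 w3"
  obtains u0 a02 a03 a12 where
    "u0 = (-(of_nat q - 1)*(of_nat q - 2) + (of_nat q + 2)* complex_of_real r) / (2* of_nat q*(of_nat q + 1))"
    "a02 = ((of_nat q + 2)*(of_nat q - 1) - (of_nat q - 2)* complex_of_real r) / (2* of_nat q*(of_nat q - 3))"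
    "a03 = (5*(of_nat q)^2 - 2* of_nat q - 19 - (of_nat q - 1)* complex_of_real r) / (2*(of_nat q + 1)*(of_nat q - 3))"
    "a12 = 2*(-((of_nat q)^4) + 2*(of_nat q)^3 + 4*(of_nat q)^2 - 10* of_nat q + 1 + (of_nat q - 1)* complex_of_real r) / ((of_nat q)^2*(of_nat q + 1)*(of_nat q - 3))"
    "w1 + 1/w1 = u0" "w2 = (w1^2 - 1) / (a12*w1 - a02)" "w3 = (w1^2 - 1) / ((-a02)*w1 - a03)"
  using assms unfolding cond_vi_def Let_def by blast

lemma vi_real:
  fixes q :: nat and r :: real
  assumes "u0 = (-(of_nat q - 1)*(of_nat q - 2) + (of_nat q + 2)* complex_of_real r) / (2* of_nat q*(of_nat q + 1))"
  shows "u0 = complex_of_real ((-(real q-1)*(real q-2) + (real q+2)*r) / (2*real q*(real q+1)))"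
  using assms by simp

lemma vi_pos:
  fixes q :: nat and r :: real and A :: "nat \<Rightarrow> complex^'a::finite^'a"
  assumes q4: "q \<ge> 4" and rr: "r^2 = (17 * real q - 1) * (real q - 1)" and rpos: "r > 0"
    and vi: "cond_vi q r w1 w2 w3"
    and card: "of_nat CARD('a) = (of_nat q)^2 - (1::complex)"
    and sch: "sym_assoc_scheme 3 A" and eig: "first_eigenmatrix 3 A (P_q q)"
    and nz: "w1 \<noteq> 0" "w2 \<noteq> 0" "w3 \<noteq> 0"
  shows "complex_hadamard (A 0 + scale_cmat w1 (A 1) + scale_cmat w2 (A 2) + scale_cmat w3 (A 3))"
proof -
  define Q where "Q = (of_nat q :: complex)"
  define R where "R = complex_of_real r"
  have q4': "real q \<ge> 4" using q4 by simp
  have QR: "Q = complex_of_real (real q)" by (simp add: Q_def)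
  have Qnz: "Q \<noteq> 0" "Q + 1 \<noteq> 0" "Q - 3 \<noteq> 0"
  proof -
    have "real q \<noteq> 0" "real q + 1 \<noteq> 0" "real q - 3 \<noteq> 0" using q4' by auto
    thus "Q \<noteq> 0" "Q + 1 \<noteq> 0" "Q - 3 \<noteq> 0"
      unfolding QR by (metis of_real_eq_0_iff of_real_1 of_real_add of_real_diff of_real_numeral)+
  qed
  have R2: "R^2 = (17*Q-1)*(Q-1)"
  proof -
    have "complex_of_real (r^2) = complex_of_real ((17 * real q - 1) * (real q - 1))" using rr by simp
    thus ?thesis unfolding R_def QR by simp
  qed
  obtain u0 a02 a03 a12 where
    e_u0: "u0 = (-(Q - 1)*(Q - 2) + (Q + 2)*R) / (2*Q*(Q + 1))" and
    e_a02: "a02 = ((Q + 2)*(Q - 1) - (Q - 2)*R) / (2*Q*(Q - 3))" and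
    e_a03: "a03 = (5*Q^2 - 2*Q - 19 - (Q - 1)*R) / (2*(Q + 1)*(Q - 3))" and
    e_a12: "a12 = 2*(-(Q^4) + 2*Q^3 + 4*Q^2 - 10*Q + 1 + (Q - 1)*R) / (Q^2*(Q + 1)*(Q - 3))" and
    w1e: "w1 + 1/w1 = u0" and w2d: "w2 = (w1^2 - 1) / (a12*w1 - a02)" and w3d: "w3 = (w1^2 - 1) / ((-a02)*w1 - a03)"
    using vi_unfold[OF vi] unfolding Q_def R_def by metis
  define a23 where "a23 = (Q^2 - Q*R - 3*Q - 2*R + 2)/(2*Q*(Q+1))"
  have dnz: "2*Q*(Q+1) \<noteq> 0" "2*Q*(Q-3) \<noteq> 0" "2*(Q+1)*(Q-3) \<noteq> 0" "Q^2*(Q+1)*(Q-3) \<noteq> 0"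
    using Qnz by (simp_all only: mult_eq_0_iff power_eq_0_iff de_Morgan_disj; simp)+
  have h_u0: "(2*Q*(Q+1))*u0 = (0 - Q^2 + Q*R + 3*Q + 2*R - 2)"
  proof -
    have "(2*Q*(Q+1))*u0 = -(Q - 1)*(Q - 2) + (Q + 2)*R" unfolding e_u0 using dnz(1) by simp
    thus ?thesis by algebra
  qed
  have h_a02: "(2*Q*(Q-3))*a02 = (Q^2 - Q*R + Q + 2*R - 2)"
  proof -
    have "(2*Q*(Q-3))*a02 = (Q + 2)*(Q - 1) - (Q - 2)*R" unfolding e_a02 using dnz(2) by simp
    thus ?thesis by algebra
  qed
  have h_a03: "(2*(Q+1)*(Q-3))*a03 = 5*Q^2 - 2*Q - 19 - (Q - 1)*R"
    unfolding e_a03 using dnz(3) by simp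
  have h_a12: "(Q^2*(Q+1)*(Q-3))*a12 = 2*(-(Q^4) + 2*Q^3 + 4*Q^2 - 10*Q + 1 + (Q - 1)*R)"
    unfolding e_a12 using dnz(4) by simp
  have h_a23: "(2*Q*(Q+1))*a23 = Q^2 - Q*R - 3*Q - 2*R + 2"
    unfolding a23_def using dnz(1) by simp
  note HY = Qnz R2
  have h_a03': "(2*(Q+1)*(Q-3))*a03 = (5*Q^2 - Q*R - 2*Q + R - 19)"
    using h_a03 by (simp add: algebra_simps)
  have h_a12': "(Q^2*(Q+1)*(Q-3))*a12 = (0 - 2*Q^4 + 4*Q^3 + 8*Q^2 + 2*Q*R - 20*Q - 2*R + 2)"
    using h_a12 by (simp add: algebra_simps)
  have h_a23': "(2*Q*(Q+1))*a23 = (Q^2 - Q*R - 3*Q - 2*R + 2)" using h_a23 by simp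
  have K2f: "u0^2 - u0*a02*a12 + a02^2 + a12^2 - 4 = 0" using K2[OF Qnz R2 h_u0 h_a02 h_a12'] by simp
  have K3f: "u0^2 + u0*a02*a03 + a02^2 + a03^2 - 4 = 0" using K3[OF Qnz R2 h_u0 h_a02 h_a03'] by simp
  have E1f: "a02*a03*a23 + a02*a12*a23 - a03^2 + a12^2 = 0" using E1[OF Qnz R2 h_a02 h_a03' h_a12' h_a23'] by simp
  have E2f: "u0*a02^2 + u0*a02*a12*a23 + u0*a12^2 - a02^2*a23 + 2*a02*a03 - 2*a02*a12 + a03*a12*a23 = 0"
    using E2[OF Qnz R2 h_u0 h_a02 h_a03' h_a12' h_a23'] by simp
  note core = vi_core[OF nz(1) w2d w3d nz(2) nz(3) w1e K2f K3f E1f E2f]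
  have m1: "cmod w1 = 1"
  proof (rule unit_sum[OF nz(1)])
    show "w1 + 1/w1 = complex_of_real ((-(real q-1)*(real q-2) + (real q+2)*r) / (2*real q*(real q+1)))"
      using w1e e_u0 unfolding Q_def R_def by simp
    show "((-(real q-1)*(real q-2) + (real q+2)*r) / (2*real q*(real q+1)))^2 < 4"
      by (rule ineq_pos[OF q4' rpos rr])
  qed
  have cw: "cnj w1 = 1/w1" using cnj_unit[OF m1] .
  have ra: "cnj a02 = a02" "cnj a03 = a03" "cnj a12 = a12"
    unfolding e_a02 e_a03 e_a12 Q_def R_def by simp_all
  have m2: "cmod w2 = 1" by (rule unit_w2[OF nz(1) cw ra(3) ra(1) w2d nz(2) core(6)])
  have m3: "cmod w3 = 1" by (rule unit_w2[OF nz(1) cw _ ra(2) w3d nz(3) core(7)]) (simp add: ra(1))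
  have r0: "(Q^4*a12 + 2*Q^4 - 2*Q^3*a02 - 2*Q^3*a12 + 2*Q^3*a23 - 4*Q^3 + 2*Q^2*u0 + 10*Q^2*a02 - 4*Q^2*a23 + 4*Q^2 - 4*Q*u0 - 8*Q*a02 + 4*Q*a03 - 16*Q - 8*a03 + 24) = 0"
    by (rule ROW0[OF Qnz R2 h_u0 h_a02 h_a03' h_a12' h_a23'])
  have RW0: "1 + (Q^2/2 - Q)^2 + (Q^2/2)^2 + (Q-2)^2 + (Q^2/2 - Q)*u0 + (Q^2/2)*a02 + (Q-2)*a03
             + (Q^2/2 - Q)*(Q^2/2)*a12 + (Q^2/2 - Q)*(Q-2)*(-a02) + (Q^2/2)*(Q-2)*a23 = Q^2 - 1"
  proof -
    have "4*((1 + (Q^2/2 - Q)^2 + (Q^2/2)^2 + (Q-2)^2 + (Q^2/2 - Q)*u0 + (Q^2/2)*a02 + (Q-2)*a03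
             + (Q^2/2 - Q)*(Q^2/2)*a12 + (Q^2/2 - Q)*(Q-2)*(-a02) + (Q^2/2)*(Q-2)*a23) - (Q^2 - 1)) = (Q^4*a12 + 2*Q^4 - 2*Q^3*a02 - 2*Q^3*a12 + 2*Q^3*a23 - 4*Q^3 + 2*Q^2*u0 + 10*Q^2*a02 - 4*Q^2*a23 + 4*Q^2 - 4*Q*u0 - 8*Q*a02 + 4*Q*a03 - 16*Q - 8*a03 + 24)" by (simp add: field_simps eval_nat_numeral)
    also note r0
    finally show ?thesis by (metis mult_eq_0_iff right_minus_eq zero_neq_numeral)
  qed
  have r1: "(0 - Q^2*a12 - 2*Q^2 + 2*Q*u0 + 2*Q*a23 - 4*a03 + 12) = 0"
    by (rule ROW1[OF Qnz R2 h_u0 h_a03' h_a12' h_a23'])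
  have RW1: "1 + (Q/2)^2 + (-Q/2)^2 + (-1)^2 + (Q/2)*u0 + (-Q/2)*a02 + (-1)*a03
             + (Q/2)*(-Q/2)*a12 + (Q/2)*(-1)*(-a02) + (-Q/2)*(-1)*a23 = Q^2 - 1"
  proof -
    have "4*((1 + (Q/2)^2 + (-Q/2)^2 + (-1)^2 + (Q/2)*u0 + (-Q/2)*a02 + (-1)*a03
             + (Q/2)*(-Q/2)*a12 + (Q/2)*(-1)*(-a02) + (-Q/2)*(-1)*a23) - (Q^2 - 1)) = (0 - Q^2*a12 - 2*Q^2 + 2*Q*u0 + 2*Q*a23 - 4*a03 + 12)" by (simp add: field_simps eval_nat_numeral)
    also note r1
    finally show ?thesis by (metis mult_eq_0_iff right_minus_eq zero_neq_numeral)
  qed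
  have r2: "(2*Q^2*a02 + Q^2*a12 - 2*Q^2*a23 + 2*Q^2 - 2*Q*u0 - 10*Q*a02 + 4*Q*a03 - 2*Q*a12 + 4*Q*a23 - 20*Q + 4*u0 + 8*a02 - 8*a03 + 28) = 0"
    by (rule ROW2[OF Qnz R2 h_u0 h_a02 h_a03' h_a12' h_a23'])
  have RW2: "1 + (-Q/2+1)^2 + (-Q/2)^2 + (Q-2)^2 + (-Q/2+1)*u0 + (-Q/2)*a02 + (Q-2)*a03
             + (-Q/2+1)*(-Q/2)*a12 + (-Q/2+1)*(Q-2)*(-a02) + (-Q/2)*(Q-2)*a23 = Q^2 - 1"
  proof -
    have "4*((1 + (-Q/2+1)^2 + (-Q/2)^2 + (Q-2)^2 + (-Q/2+1)*u0 + (-Q/2)*a02 + (Q-2)*a03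
             + (-Q/2+1)*(-Q/2)*a12 + (-Q/2+1)*(Q-2)*(-a02) + (-Q/2)*(Q-2)*a23) - (Q^2 - 1)) = (2*Q^2*a02 + Q^2*a12 - 2*Q^2*a23 + 2*Q^2 - 2*Q*u0 - 10*Q*a02 + 4*Q*a03 - 2*Q*a12 + 4*Q*a23 - 20*Q + 4*u0 + 8*a02 - 8*a03 + 28)" by (simp add: field_simps eval_nat_numeral)
    also note r2
    finally show ?thesis by (metis mult_eq_0_iff right_minus_eq zero_neq_numeral)
  qed
  have r3: "(0 - Q^2*a12 - 2*Q^2 - 2*Q*u0 - 2*Q*a23 - 4*a03 + 12) = 0"
    by (rule ROW3[OF Qnz R2 h_u0 h_a03' h_a12' h_a23'])
  have RW3: "1 + (-Q/2)^2 + (Q/2)^2 + (-1)^2 + (-Q/2)*u0 + (Q/2)*a02 + (-1)*a03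
             + (-Q/2)*(Q/2)*a12 + (-Q/2)*(-1)*(-a02) + (Q/2)*(-1)*a23 = Q^2 - 1"
  proof -
    have "4*((1 + (-Q/2)^2 + (Q/2)^2 + (-1)^2 + (-Q/2)*u0 + (Q/2)*a02 + (-1)*a03
             + (-Q/2)*(Q/2)*a12 + (-Q/2)*(-1)*(-a02) + (Q/2)*(-1)*a23) - (Q^2 - 1)) = (0 - Q^2*a12 - 2*Q^2 - 2*Q*u0 - 2*Q*a23 - 4*a03 + 12)" by (simp add: field_simps eval_nat_numeral)
    also note r3
    finally show ?thesis by (metis mult_eq_0_iff right_minus_eq zero_neq_numeral)
  qed
  show ?thesis
    by (rule suff_lemma[OF Q_def card[folded Q_def] sch eig nz m1 m2 m3 w1e core(1-5) RW0 RW1 RW2 RW3])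
qed

lemma vi_neg:
  fixes q :: nat and r :: real
  assumes q4: "q \<ge> 4" and rr: "r^2 = (17 * real q - 1) * (real q - 1)" and rneg: "r < 0"
    and vi: "cond_vi q r w1 w2 w3" and m: "cmod w1 = 1"
  shows False
proof -
  obtain u0 a02 a03 a12 where e: "u0 = (-(of_nat q - 1)*(of_nat q - 2) + (of_nat q + 2)* complex_of_real r) / (2* of_nat q*(of_nat q + 1))"
    and w: "w1 + 1/w1 = u0" using vi_unfold[OF vi] by metis
  have "((-(real q-1)*(real q-2) + (real q+2)*r) / (2*real q*(real q+1)))^2 \<le> 4"
    using unit_bound[OF m] w vi_real[OF e] by simp
  moreover have "4 < ((-(real q-1)*(real q-2) + (real q+2)*r) / (2*real q*(real q+1)))^2"
    using ineq_neg[of "real q" r] q4 rr rneg by simp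
  ultimately show False by simp
qed

theorem corollary4p2:
  fixes q :: nat
    and A :: "nat \<Rightarrow> complex^'a::finite^'a"
    and w1 w2 w3 :: complex
  assumes "q \<ge> 4"
    and "CARD('a) = q^2 - 1"
    and "sym_assoc_scheme 3 A"
    and "first_eigenmatrix 3 A (P_q q)"
    and "w1 \<noteq> 0" "w2 \<noteq> 0" "w3 \<noteq> 0"
    and "cond_i q w1 w2 w3 \<or> cond_ii q w1 w2 w3 \<or> cond_iii q w1 w2 w3 \<or>
         cond_iv q w1 w2 w3 \<or> cond_v q w1 w2 w3 \<or>
         (\<exists>r::real. r^2 = (17 * real q - 1) * (real q - 1) \<and> cond_vi q r w1 w2 w3)"
  shows "complex_hadamard (A 0 + scale_cmat w1 (A 1) + scale_cmat w2 (A 2) + scale_cmat w3 (A 3))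
     \<longleftrightarrow> (cond_iii q w1 w2 w3 \<or> cond_iv q w1 w2 w3 \<or> cond_v q w1 w2 w3 \<or>
          (\<exists>r::real. r > 0 \<and> r^2 = (17 * real q - 1) * (real q - 1) \<and> cond_vi q r w1 w2 w3))"
proof -
  note sch = assms(3) and eig = assms(4) and nz = assms(5-7) and cases = assms(8)
  define Q where "Q = (of_nat q :: complex)"
  have q4: "real q \<ge> 4" using assms(1) by simp
  have QR: "Q = complex_of_real (real q)" by (simp add: Q_def)
  have card0: "of_nat CARD('a) = (of_nat q)^2 - (1::complex)"
  proof -
    have "q^2 \<ge> 1" using assms(1) by simp
    thus ?thesis unfolding assms(2) by (simp add: of_nat_diff)
  qed
  have card: "of_nat CARD('a) = Q^2 - 1" using card0 unfolding Q_def .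
  have Qnz1: "Q \<noteq> 0" unfolding Q_def using assms(1) by simp
  have Qnz2: "Q^2 - 4 \<noteq> 0"
  proof -
    have "(real q)^2 - 4 \<noteq> 0" using q16[OF q4] by simp
    moreover have "Q^2 - 4 = complex_of_real ((real q)^2 - 4)" unfolding QR by simp
    ultimately show ?thesis by (metis of_real_eq_0_iff)
  qed
  have Qnz: "Q \<noteq> 0" "Q^2 - 4 \<noteq> 0" "Q^2 \<noteq> 0" using Qnz1 Qnz2 by simp_all
  let ?W = "A 0 + scale_cmat w1 (A 1) + scale_cmat w2 (A 2) + scale_cmat w3 (A 3)"
  show ?thesis
  proof
    assume H: "complex_hadamard ?W"
    have m: "cmod w1 = 1" "cmod w2 = 1" "cmod w3 = 1" using hadamard_nec[OF sch H] by auto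
    have not_i: "\<not> (w3 + 1/w3 + Q^2 - 3 = 0)"
    proof
      assume e: "w3 + 1/w3 + Q^2 - 3 = 0"
      have "w3 + 1/w3 = 3 - Q^2" using e by (simp add: algebra_simps)
      hence "w3 + 1/w3 = complex_of_real (3 - (real q)^2)" unfolding QR by simp
      hence "(3 - (real q)^2)^2 \<le> 4" by (rule unit_bound[OF m(3)])
      with ineq_i[OF q4] show False by simp
    qed
    from cases show "cond_iii q w1 w2 w3 \<or> cond_iv q w1 w2 w3 \<or> cond_v q w1 w2 w3 \<or>
          (\<exists>r::real. r > 0 \<and> r^2 = (17 * real q - 1) * (real q - 1) \<and> cond_vi q r w1 w2 w3)"
    proof (elim disjE)
      assume "cond_i q w1 w2 w3" thus ?thesis using not_i unfolding cond_i_def Let_def Q_def by blast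
    next
      assume "cond_ii q w1 w2 w3" thus ?thesis using not_i unfolding cond_ii_def Let_def Q_def by blast
    next
      assume "\<exists>r::real. r^2 = (17 * real q - 1) * (real q - 1) \<and> cond_vi q r w1 w2 w3"
      then obtain r where rr: "r^2 = (17 * real q - 1) * (real q - 1)" and vi: "cond_vi q r w1 w2 w3" by blast
      have "r \<noteq> 0"
      proof
        assume "r = 0"
        with rr have "(17 * real q - 1) * (real q - 1) = 0" by simp
        with q4 show False by simp
      qed
      moreover have "\<not> r < 0" using vi_neg[OF assms(1) rr _ vi m(1)] by blast
      ultimately have "r > 0" by simp
      thus ?thesis using rr vi by blast
    qed simp_all
  next
    assume "cond_iii q w1 w2 w3 \<or> cond_iv q w1 w2 w3 \<or> cond_v q w1 w2 w3 \<or>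
          (\<exists>r::real. r > 0 \<and> r^2 = (17 * real q - 1) * (real q - 1) \<and> cond_vi q r w1 w2 w3)"
    thus "complex_hadamard ?W"
    proof (elim disjE)
      assume c: "cond_iii q w1 w2 w3"
      define u0 where "u0 = 2*(Q^2 - 6)/(Q^2 - 4)"
      have e1: "w1 + 1/w1 = u0" and e2: "w2 = -1" and e3: "w3 = w1"
        using c unfolding cond_iii_def Let_def Q_def u0_def by auto
      have hs: "(Q^2-4)*u0 = (2*Q^2 - 12)" unfolding u0_def using Qnz(2) by simp
      have m1: "cmod w1 = 1"
      proof (rule unit_sum[OF nz(1)])
        show "w1 + 1/w1 = complex_of_real (2*((real q)^2-6)/((real q)^2-4))"
          using e1 unfolding u0_def QR by simp
        show "(2*((real q)^2-6)/((real q)^2-4))^2 < 4" by (rule ineq_iii[OF q4])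
      qed
      have m2: "cmod w2 = 1" using e2 by simp
      have m3: "cmod w3 = 1" using e3 m1 by simp
      note R = rows_iii[OF hs Qnz(2)]
      show ?thesis
      proof (rule suff_lemma[OF Q_def card sch eig nz m1 m2 m3 e1 _ _ _ _ _ R])
        show "w2 + 1/w2 = -2" using e2 by simp
        show "w3 + 1/w3 = u0" using e1 e3 by simp
        have "w1/w2 + w2/w1 = -(w1 + 1/w1)" using e2 by simp
        thus "w1/w2 + w2/w1 = -u0" using e1 by simp
        show "w1/w3 + w3/w1 = 2" using e3 nz(1) by simp
        have "w2/w3 + w3/w2 = -(w1 + 1/w1)" using e2 e3 by simp
        thus "w2/w3 + w3/w2 = -u0" using e1 by simp
      qed
    next
      assume c: "cond_iv q w1 w2 w3"
      define u0 where "u0 = -2*(Q^2 - 2)/Q^2"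
      have e1: "w1 = 1" and e3: "w3 = 1" and e2: "w2 + 1/w2 = u0"
        using c unfolding cond_iv_def Let_def Q_def u0_def by auto
      have hs: "(Q^2)*u0 = (0 - 2*Q^2 + 4)"
      proof -
        have "(Q^2)*u0 = -2*(Q^2 - 2)" unfolding u0_def using Qnz(3) by simp
        also have "\<dots> = 0 - 2*Q^2 + 4" by algebra
        finally show ?thesis .
      qed
      have m2: "cmod w2 = 1"
      proof (rule unit_sum[OF nz(2)])
        show "w2 + 1/w2 = complex_of_real (-2*((real q)^2-2)/(real q)^2)"
          using e2 unfolding u0_def QR by simp
        show "(-2*((real q)^2-2)/(real q)^2)^2 < 4" by (rule ineq_iv[OF q4])
      qed
      have m1: "cmod w1 = 1" using e1 by simp
      have m3: "cmod w3 = 1" using e3 by simp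
      note R = rows_iv[OF hs Qnz(3)]
      show ?thesis
      proof (rule suff_lemma[OF Q_def card sch eig nz m1 m2 m3 _ e2 _ _ _ _ R])
        show "w1 + 1/w1 = 2" using e1 by simp
        show "w3 + 1/w3 = 2" using e3 by simp
        show "w1/w2 + w2/w1 = u0" using e1 e2 by (simp add: add.commute)
        show "w1/w3 + w3/w1 = 2" using e1 e3 by simp
        show "w2/w3 + w3/w2 = u0" using e2 e3 by simp
      qed
    next
      assume c: "cond_v q w1 w2 w3"
      define u0 where "u0 = -2/Q"
      have e1: "w1 + 1/w1 = u0" and e2: "w2 = 1/w1" and e3: "w3 = 1"
        using c unfolding cond_v_def Let_def Q_def u0_def by auto
      have hs: "(Q)*u0 = (0 - 2)" unfolding u0_def using Qnz(1) by simp
      have m1: "cmod w1 = 1"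
      proof (rule unit_sum[OF nz(1)])
        show "w1 + 1/w1 = complex_of_real (-2/real q)"
          using e1 unfolding u0_def QR by simp
        show "(-2/real q)^2 < 4" by (rule ineq_v[OF q4])
      qed
      have m2: "cmod w2 = 1" using e2 m1 by (simp add: norm_divide)
      have m3: "cmod w3 = 1" using e3 by simp
      note R = rows_v[OF hs Qnz(1)]
      show ?thesis
      proof (rule suff_lemma[OF Q_def card sch eig nz m1 m2 m3 e1 _ _ _ _ _ R])
        show "w2 + 1/w2 = u0" using e1 e2 by (simp add: add.commute)
        show "w3 + 1/w3 = 2" using e3 by simp
        show "w1/w2 + w2/w1 = u0^2 - 2"
        proof -
          have "w1/w2 + w2/w1 = (w1 + 1/w1)^2 - 2" unfolding e2 using nz(1) by (simp add: field_simps power2_eq_square)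
          thus ?thesis using e1 by simp
        qed
        show "w1/w3 + w3/w1 = u0" using e1 e3 by simp
        show "w2/w3 + w3/w2 = u0" using e1 e2 e3 by (simp add: add.commute)
      qed
    next
      assume "\<exists>r::real. r > 0 \<and> r^2 = (17 * real q - 1) * (real q - 1) \<and> cond_vi q r w1 w2 w3"
      then obtain r where "r > 0" "r^2 = (17 * real q - 1) * (real q - 1)" "cond_vi q r w1 w2 w3" by blast
      thus ?thesis using vi_pos[OF assms(1) _ _ _ card0 sch eig nz] by blast
    qed
  qed
qed

end
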